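(* Let $L<U$ be reals and $n\ge1$. For the variance function $f:[L,U]^n\to\mathbb{R}$, $f(x_1,\dots,x_n)=\frac1n\sum_{i=1}^n(x_i-\bar x)^2$ with $\bar x=\frac1n\sum_{i=1}^n x_i$, and any $\beta>0$, the $\beta$-smooth sensitivity $S^*_{f,\beta}(V)$ of $f$ at a given dataset $V=(x_1,\dots,x_n)\in[L,U]^n$ can be computed in $\mathcal{O}(n^2)$ time.
   Context: A dataset is a list $V=(x_1,\dots,x_n)$ of $n$ real numbers in $[L,U]$. For datasets $x,y\in[L,U]^n$, $d(x,y)$ is the number of positions in which they differ; $x,y$ are neighbors if $d(x,y)=1$. The local sensitivity of $f$ at $x$ is $LS_f(x)=\max_{y:\,d(x,y)=1}|f(x)-f(y)|$. For $\beta>0$, the $\beta$-smooth sensitivity of $f$ at $x$ is $S^*_{f,\beta}(x)=\max_{y\in[L,U]^n} LS_f(y)\,e^{-\beta d(x,y)}$. *)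

theory Defs
  imports Complex_Main
begin

definition datasets :: "nat \<Rightarrow> real \<Rightarrow> real \<Rightarrow> real list set" where
  "datasets n L U = {x. length x = n \<and> (\<forall>i<n. L \<le> x ! i \<and> x ! i \<le> U)}"

definition hdist :: "real list \<Rightarrow> real list \<Rightarrow> nat" where
  "hdist x y = card {i. i < length x \<and> x ! i \<noteq> y ! i}"

definition mean :: "real list \<Rightarrow> real" where
  "mean x = (\<Sum>i<length x. x ! i) / real (length x)"

definition variance :: "real list \<Rightarrow> real" where
  "variance x = (\<Sum>i<length x. (x ! i - mean x)\<^sup>2) / real (length x)"

definition local_sens :: "(real list \<Rightarrow> real) \<Rightarrow> nat \<Rightarrow> real \<Rightarrow> real \<Rightarrow> real list \<Rightarrow> real" where
  "local_sens f n L U x = (SUP y \<in> {y \<in> datasets n L U. hdist x y = 1}. \<bar>f x - f y\<bar>)"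

definition smooth_sens :: "(real list \<Rightarrow> real) \<Rightarrow> real \<Rightarrow> nat \<Rightarrow> real \<Rightarrow> real \<Rightarrow> real list \<Rightarrow> real" where
  "smooth_sens f \<beta> n L U x =
     (SUP y \<in> datasets n L U. local_sens f n L U y * exp (- \<beta> * real (hdist x y)))"

text \<open>State: natural-number registers (used for counters / addresses) and a
  real-valued memory (indirectly addressable via natural-number expressions).\<close>
type_synonym state = "(nat \<Rightarrow> nat) \<times> (nat \<Rightarrow> real)"

datatype aexp = NConst nat | NReg nat | NAdd aexp aexp | NSub aexp aexp | NMul aexp aexp

datatype rexp = RConst int | RLoad aexp | RofNat aexp
  | RAdd rexp rexp | RSub rexp rexp | RMul rexp rexp | RDiv rexp rexp
  | RExp rexp | RSqrt rexp

datatype bexp = BRLess rexp rexp | BNLess aexp aexp | BNot bexp | BAnd bexp bexp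

datatype com = SKIP | NAssign nat aexp | RStore aexp rexp | Seq com com
  | If bexp com com | While bexp com

fun aval :: "aexp \<Rightarrow> (nat \<Rightarrow> nat) \<Rightarrow> nat" where
  "aval (NConst k) I = k"
| "aval (NReg i) I = I i"
| "aval (NAdd a b) I = aval a I + aval b I"
| "aval (NSub a b) I = aval a I - aval b I"
| "aval (NMul a b) I = aval a I * aval b I"

fun rval :: "rexp \<Rightarrow> state \<Rightarrow> real" where
  "rval (RConst k) s = of_int k"
| "rval (RLoad a) s = snd s (aval a (fst s))"
| "rval (RofNat a) s = real (aval a (fst s))"
| "rval (RAdd e1 e2) s = rval e1 s + rval e2 s"
| "rval (RSub e1 e2) s = rval e1 s - rval e2 s"
| "rval (RMul e1 e2) s = rval e1 s * rval e2 s"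
| "rval (RDiv e1 e2) s = rval e1 s / rval e2 s"
| "rval (RExp e) s = exp (rval e s)"
| "rval (RSqrt e) s = sqrt (rval e s)"

fun bval :: "bexp \<Rightarrow> state \<Rightarrow> bool" where
  "bval (BRLess e1 e2) s = (rval e1 s < rval e2 s)"
| "bval (BNLess a b) s = (aval a (fst s) < aval b (fst s))"
| "bval (BNot b) s = (\<not> bval b s)"
| "bval (BAnd b1 b2) s = (bval b1 s \<and> bval b2 s)"

text \<open>Big-step semantics; \<open>big c s t s'\<close>: c started in s terminates in s' after t steps.\<close>
inductive big :: "com \<Rightarrow> state \<Rightarrow> nat \<Rightarrow> state \<Rightarrow> bool" where
  Skip: "big SKIP s 1 s"
| NAssign: "big (NAssign i a) (I, R) 1 (I(i := aval a I), R)"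
| RStore: "big (RStore a e) (I, R) 1 (I, R(aval a I := rval e (I, R)))"
| Seq: "big c1 s t1 s' \<Longrightarrow> big c2 s' t2 s'' \<Longrightarrow> big (Seq c1 c2) s (t1 + t2) s''"
| IfT: "bval b s \<Longrightarrow> big c1 s t s' \<Longrightarrow> big (If b c1 c2) s (t + 1) s'"
| IfF: "\<not> bval b s \<Longrightarrow> big c2 s t s' \<Longrightarrow> big (If b c1 c2) s (t + 1) s'"
| WhileF: "\<not> bval b s \<Longrightarrow> big (While b c) s 1 s"
| WhileT: "bval b s \<Longrightarrow> big c s t1 s' \<Longrightarrow> big (While b c) s' t2 s'' \<Longrightarrow>
           big (While b c) s (t1 + t2 + 1) s''"

text \<open>Input encoding: nat register 0 holds n; real memory holds L, U, \<beta> at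
  addresses 0, 1, 2 and the dataset entry x!i at address 3+i; everything else 0.
  The output is read from real memory address 0.\<close>
definition init_state :: "nat \<Rightarrow> real \<Rightarrow> real \<Rightarrow> real \<Rightarrow> real list \<Rightarrow> state" where
  "init_state n L U \<beta> x =
     ((\<lambda>i. if i = 0 then n else 0),
      (\<lambda>a. if a = 0 then L else if a = 1 then U else if a = 2 then \<beta>
            else if 3 \<le> a \<and> a - 3 < length x then x ! (a - 3) else 0))"

end

theory Submission
  imports Defs
begin

definition prec :: "(nat \<Rightarrow> real) \<Rightarrow> nat \<Rightarrow> nat \<Rightarrow> bool" where
  "prec w l i \<longleftrightarrow> w i < w l \<or> (w l = w i \<and> l < i)"

definition rk :: "nat \<Rightarrow> (nat \<Rightarrow> real) \<Rightarrow> nat \<Rightarrow> nat" where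
  "rk n w i = card {l. l < n \<and> prec w l i}"

definition PS :: "nat \<Rightarrow> (nat \<Rightarrow> real) \<Rightarrow> nat \<Rightarrow> real" where
  "PS n w r = (\<Sum>i<n. if rk n w i < r then w i else 0)"

definition TS :: "nat \<Rightarrow> (nat \<Rightarrow> real) \<Rightarrow> nat \<Rightarrow> nat \<Rightarrow> real" where
  "TS n w k j = (if rk n w j < k then PS n w (Suc k) - w j else PS n w k)"

definition topset :: "nat \<Rightarrow> (nat \<Rightarrow> real) \<Rightarrow> nat \<Rightarrow> nat \<Rightarrow> nat set" where
  "topset n w k j = (if rk n w j < k then {i. i < n \<and> rk n w i < Suc k} - {j}
                     else {i. i < n \<and> rk n w i < k})"

lemma prec_trans: "prec w a b \<Longrightarrow> prec w b c \<Longrightarrow> prec w a c"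
  unfolding prec_def by auto

lemma prec_irrefl: "\<not> prec w a a"
  unfolding prec_def by auto

lemma prec_total: "a \<noteq> b \<Longrightarrow> prec w a b \<or> prec w b a"
  unfolding prec_def by auto

lemma rk_less:
  assumes "prec w l i" "l < n"
  shows "rk n w l < rk n w i"
proof -
  have "{l'. l' < n \<and> prec w l' l} \<subset> {l'. l' < n \<and> prec w l' i}"
    using assms prec_trans prec_irrefl by blast
  then show ?thesis unfolding rk_def by (intro psubset_card_mono) auto
qed

lemma rk_bound:
  assumes "i < n" shows "rk n w i < n"
proof -
  have "{l. l < n \<and> prec w l i} \<subseteq> {..<n} - {i}" using prec_irrefl by auto
  then have "rk n w i \<le> card ({..<n} - {i})" unfolding rk_def by (intro card_mono) auto
  also have "\<dots> = n - 1" using assms by simp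
  finally show ?thesis using assms by simp
qed

lemma rk_inj: "inj_on (rk n w) {..<n}"
proof (rule inj_onI)
  fix a b assume a: "a \<in> {..<n}" and b: "b \<in> {..<n}" and e: "rk n w a = rk n w b"
  show "a = b"
  proof (rule ccontr)
    assume "a \<noteq> b"
    then have "prec w a b \<or> prec w b a" by (rule prec_total)
    then show False using rk_less[of w a b n] rk_less[of w b a n] a b e by auto
  qed
qed

lemma rk_image: "rk n w ` {..<n} = {..<n}"
proof -
  have sub: "rk n w ` {..<n} \<subseteq> {..<n}" using rk_bound by auto
  have "card (rk n w ` {..<n}) = n" using rk_inj card_image by fastforce
  then show ?thesis using sub by (intro card_subset_eq) auto
qed

lemma card_top: "card {i. i < n \<and> rk n w i < r} = min r n"
proof -
  let ?T = "{i. i < n \<and> rk n w i < r}"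
  have "inj_on (rk n w) ?T" using rk_inj by (rule inj_on_subset) auto
  then have "card ?T = card (rk n w ` ?T)" by (simp add: card_image)
  also have "rk n w ` ?T = {..<min r n}"
  proof
    show "rk n w ` ?T \<subseteq> {..<min r n}" using rk_bound by auto
    show "{..<min r n} \<subseteq> rk n w ` ?T"
    proof
      fix m assume "m \<in> {..<min r n}"
      then have "m \<in> rk n w ` {..<n}" using rk_image by auto
      then obtain i where "i < n" "m = rk n w i" by auto
      then show "m \<in> rk n w ` ?T" using \<open>m \<in> {..<min r n}\<close> by auto
    qed
  qed
  finally show ?thesis by simp
qed

lemma rk_mono_w:
  assumes "i < n" "l < n" "rk n w i < rk n w l"
  shows "w l \<le> w i"
proof (rule ccontr)
  assume "\<not> w l \<le> w i"
  then have "prec w l i" unfolding prec_def by auto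
  then have "rk n w l < rk n w i" using rk_less assms by blast
  then show False using assms by simp
qed

lemma PS_eq: "PS n w r = sum w {i. i < n \<and> rk n w i < r}"
proof -
  have "PS n w r = sum w ({..<n} \<inter> {i. rk n w i < r})"
    unfolding PS_def by (simp add: sum.inter_restrict)
  also have "{..<n} \<inter> {i. rk n w i < r} = {i. i < n \<and> rk n w i < r}" by auto
  finally show ?thesis .
qed

lemma top_sum:
  assumes nn: "\<forall>i<n. 0 \<le> w i" and D: "D \<subseteq> {..<n}" and cD: "card D \<le> min r n"
  shows "sum w D \<le> PS n w r"
proof -
  define T where "T = {i. i < n \<and> rk n w i < r}"
  have fT: "finite T" unfolding T_def by auto
  have fD: "finite D" using D finite_subset by blast
  have cT: "card T = min r n" unfolding T_def by (rule card_top)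
  have "card D = card (D \<inter> T) + card (D - T)"
    using fD by (metis Diff_Diff_Int Diff_subset card_Diff_subset_Int card_mono add_diff_inverse_nat
         finite_Int inf_commute not_less card_Un_disjoint Int_Diff_disjoint Int_Diff_Un)
  moreover have "card T = card (D \<inter> T) + card (T - D)"
    using fT by (metis Int_Diff_Un Int_Diff_disjoint card_Un_disjoint finite_Diff finite_Int inf_commute)
  ultimately have cle: "card (D - T) \<le> card (T - D)" using cD cT by linarith
  obtain f where f: "f ` (D - T) \<subseteq> T - D" "inj_on f (D - T)"
    using card_le_inj[OF _ _ cle] fD fT by auto
  have "sum w (D - T) \<le> sum (w \<circ> f) (D - T)"
  proof (rule sum_mono)
    fix d assume d: "d \<in> D - T"
    then have fd: "f d \<in> T - D" using f by auto
    then have "rk n w (f d) < rk n w d" using d D unfolding T_def by auto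
    then show "w d \<le> (w \<circ> f) d" using rk_mono_w[of "f d" n d w] fd d D unfolding T_def by auto
  qed
  also have "\<dots> = sum w (f ` (D - T))" using f(2) by (simp add: sum.reindex)
  also have "\<dots> \<le> sum w (T - D)"
    using f(1) fT nn unfolding T_def by (intro sum_mono2) auto
  finally have "sum w (D - T) \<le> sum w (T - D)" .
  moreover have "sum w D = sum w (D \<inter> T) + sum w (D - T)"
    using fD by (metis sum.Int_Diff)
  moreover have "sum w T = sum w (D \<inter> T) + sum w (T - D)"
    using fT by (metis sum.Int_Diff inf_commute)
  ultimately have "sum w D \<le> sum w T" by linarith
  then show ?thesis unfolding T_def PS_eq .
qed

lemma topset_props:
  assumes "j < n" "k < n"
  shows "topset n w k j \<subseteq> {..<n} - {j}" "card (topset n w k j) = k"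
        "sum w (topset n w k j) = TS n w k j"
proof -
  show "topset n w k j \<subseteq> {..<n} - {j}" unfolding topset_def by auto
  show "card (topset n w k j) = k"
  proof (cases "rk n w j < k")
    case True
    then have "j \<in> {i. i < n \<and> rk n w i < Suc k}" using assms by auto
    then have "card ({i. i < n \<and> rk n w i < Suc k} - {j}) = min (Suc k) n - 1"
      by (simp add: card_top)
    then show ?thesis using True assms unfolding topset_def by auto
  next
    case False
    then show ?thesis using assms unfolding topset_def by (simp add: card_top)
  qed
  show "sum w (topset n w k j) = TS n w k j"
  proof (cases "rk n w j < k")
    case True
    then have "j \<in> {i. i < n \<and> rk n w i < Suc k}" using assms by auto
    then show ?thesis using True unfolding topset_def TS_def PS_eq
      by (simp add: sum_diff1)
  next
    case False
    then show ?thesis unfolding topset_def TS_def PS_eq by simp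
  qed
qed

lemma TS_max:
  assumes nn: "\<forall>i<n. 0 \<le> w i" and j: "j < n" and k: "k < n"
    and D: "D \<subseteq> {..<n} - {j}" and cD: "card D \<le> k"
  shows "sum w D \<le> TS n w k j"
proof (cases "rk n w j < k")
  case True
  have fD: "finite D" using D finite_subset by blast
  have "j \<notin> D" using D by auto
  then have "card (insert j D) \<le> min (Suc k) n" using cD k fD by auto
  then have "sum w (insert j D) \<le> PS n w (Suc k)" using top_sum[OF nn, of "insert j D" "Suc k"] D j by auto
  moreover have "sum w (insert j D) = w j + sum w D" using fD \<open>j \<notin> D\<close> by simp
  ultimately show ?thesis using True unfolding TS_def by auto
next
  case False
  have "sum w D \<le> PS n w k" using top_sum[OF nn, of D k] D cD k by auto
  then show ?thesis using False unfolding TS_def by auto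
qed

definition moth :: "nat \<Rightarrow> real list \<Rightarrow> nat \<Rightarrow> real" where
  "moth n y j = ((\<Sum>i<n. y ! i) - y ! j) / (real n - 1)"

definition Hf :: "real \<Rightarrow> real \<Rightarrow> real \<Rightarrow> real \<Rightarrow> real" where
  "Hf L U a m = max (max ((L - m)\<^sup>2 - (a - m)\<^sup>2) ((U - m)\<^sup>2 - (a - m)\<^sup>2)) ((a - m)\<^sup>2)"

definition Mf :: "real \<Rightarrow> real \<Rightarrow> real \<Rightarrow> real" where
  "Mf L U m = max ((L - m)\<^sup>2) ((U - m)\<^sup>2)"

lemma sum_upd:
  assumes "j < n" "length y = n"
  shows "(\<Sum>i<n. g (y[j := b] ! i)) = (\<Sum>i<n. g (y ! i)) - g (y ! j) + (g b :: real)"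
proof -
  have "(\<Sum>i<n. g (y[j := b] ! i)) = (\<Sum>i<n. g (y ! i) + (if i = j then g b - g (y ! j) else 0))"
    using assms by (intro sum.cong) auto
  also have "\<dots> = (\<Sum>i<n. g (y ! i)) + (g b - g (y ! j))"
    using assms by (simp add: sum.distrib)
  finally show ?thesis by simp
qed

lemma var_alt:
  assumes "length y = n" "0 < n"
  shows "variance y = (\<Sum>i<n. (y ! i)\<^sup>2) / real n - ((\<Sum>i<n. y ! i) / real n)\<^sup>2"
proof -
  define \<mu> where "\<mu> = (\<Sum>i<n. y ! i) / real n"
  have m: "mean y = \<mu>" unfolding mean_def \<mu>_def using assms by simp
  have "(\<Sum>i<n. (y ! i - \<mu>)\<^sup>2) = (\<Sum>i<n. (y ! i)\<^sup>2) - 2 * \<mu> * (\<Sum>i<n. y ! i) + real n * \<mu>\<^sup>2"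
    by (simp add: power2_diff sum_subtractf sum.distrib sum_distrib_left algebra_simps)
  also have "(\<Sum>i<n. y ! i) = real n * \<mu>" unfolding \<mu>_def using assms by simp
  finally have "(\<Sum>i<n. (y ! i - \<mu>)\<^sup>2) = (\<Sum>i<n. (y ! i)\<^sup>2) - real n * \<mu>\<^sup>2"
    by (simp add: power2_eq_square)
  then have "variance y = ((\<Sum>i<n. (y ! i)\<^sup>2) - real n * \<mu>\<^sup>2) / real n"
    unfolding variance_def m using assms by simp
  also have "\<dots> = (\<Sum>i<n. (y ! i)\<^sup>2) / real n - \<mu>\<^sup>2"
    using assms by (simp add: field_simps)
  finally show ?thesis unfolding \<mu>_def .
qed

lemma delta_alg:
  fixes S Q a b N :: real
  assumes "N \<ge> 2"
  shows "((Q - a\<^sup>2 + b\<^sup>2) / N - ((S - a + b) / N)\<^sup>2) - (Q / N - (S / N)\<^sup>2)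
     = (N - 1) / N\<^sup>2 * ((b - (S - a) / (N - 1))\<^sup>2 - (a - (S - a) / (N - 1))\<^sup>2)"
proof -
  have c0: "N - 1 \<noteq> 0" and n0: "N \<noteq> 0" using assms by auto
  define m where "m = (S - a) / (N - 1)"
  have mm: "(N - 1) * m = S - a" unfolding m_def using c0 by simp
  have "(b - m)\<^sup>2 - (a - m)\<^sup>2 = (b - a) * (b + a - 2 * m)" by (simp add: power2_eq_square algebra_simps)
  then have "(N - 1) / N\<^sup>2 * ((b - m)\<^sup>2 - (a - m)\<^sup>2) = ((N - 1) * ((b - a) * (b + a - 2 * m))) / N\<^sup>2"
    by simp
  also have "\<dots> = (b - a) * ((N - 1) * (b + a) - 2 * ((N - 1) * m)) / N\<^sup>2"
    by (rule arg_cong[of _ _ "\<lambda>t. t / N\<^sup>2"]) (simp add: algebra_simps)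
  also have "\<dots> = (b - a) * ((N - 1) * (b + a) - 2 * (S - a)) / N\<^sup>2" unfolding mm ..
  also have "\<dots> = ((Q - a\<^sup>2 + b\<^sup>2) / N - ((S - a + b) / N)\<^sup>2) - (Q / N - (S / N)\<^sup>2)"
    using n0 by (simp add: field_simps power2_eq_square)
  finally show ?thesis unfolding m_def by simp
qed

lemma delta:
  assumes "length y = n" "2 \<le> n" "j < n"
  shows "variance (y[j := b]) - variance y
       = (real n - 1) / (real n)\<^sup>2 * ((b - moth n y j)\<^sup>2 - (y ! j - moth n y j)\<^sup>2)"
proof -
  have n0: "0 < n" using assms by auto
  have l: "length (y[j := b]) = n" using assms by simp
  have s1: "(\<Sum>i<n. y[j := b] ! i) = (\<Sum>i<n. y ! i) - y ! j + b"
    using sum_upd[OF assms(3,1), of "\<lambda>x. x"] by simp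
  have s2: "(\<Sum>i<n. (y[j := b] ! i)\<^sup>2) = (\<Sum>i<n. (y ! i)\<^sup>2) - (y ! j)\<^sup>2 + b\<^sup>2"
    using sum_upd[OF assms(3,1), of "\<lambda>x. x\<^sup>2"] by simp
  have N: "real n \<ge> 2" using assms by simp
  show ?thesis
    unfolding var_alt[OF l n0] var_alt[OF assms(1) n0] s1 s2 moth_def
    using delta_alg[OF N] by simp
qed

lemma datasetsD: "y \<in> datasets n L U \<Longrightarrow> length y = n"
  "y \<in> datasets n L U \<Longrightarrow> i < n \<Longrightarrow> L \<le> y ! i"
  "y \<in> datasets n L U \<Longrightarrow> i < n \<Longrightarrow> y ! i \<le> U"
  unfolding datasets_def by auto

lemma datasets_upd: "y \<in> datasets n L U \<Longrightarrow> L \<le> b \<Longrightarrow> b \<le> U \<Longrightarrow> y[j := b] \<in> datasets n L U"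
  unfolding datasets_def by (cases "j < length y") (auto simp: nth_list_update list_update_beyond)

lemma neighbor:
  assumes y: "y \<in> datasets n L U" and z: "z \<in> datasets n L U" and h: "hdist y z = 1"
  shows "\<exists>j<n. z = y[j := z ! j] \<and> z ! j \<noteq> y ! j"
proof -
  have ly: "length y = n" and lz: "length z = n" using y z datasetsD by auto
  have "card {i. i < n \<and> y ! i \<noteq> z ! i} = 1" using h ly unfolding hdist_def by simp
  then obtain j where j: "{i. i < n \<and> y ! i \<noteq> z ! i} = {j}" by (rule card_1_singletonE)
  then have jn: "j < n" and ne: "y ! j \<noteq> z ! j" by auto
  have "z = y[j := z ! j]"
  proof (rule nth_equalityI)
    show "length z = length (y[j := z ! j])" using ly lz by simp
    fix i assume "i < length z"
    then show "z ! i = y[j := z ! j] ! i" using j lz ly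
    proof (cases "i = j")
      case False
      then have "y ! i = z ! i" using j \<open>i < length z\<close> lz by blast
      then show ?thesis using False by simp
    qed simp
  qed
  then show ?thesis using jn ne by auto
qed

lemma sq_le_M:
  assumes "L \<le> b" "b \<le> U" shows "(b - m)\<^sup>2 \<le> Mf L U m"
proof (cases "m \<le> b")
  case True
  then have "(b - m)\<^sup>2 \<le> (U - m)\<^sup>2" using assms by (intro power_mono) auto
  then show ?thesis unfolding Mf_def by auto
next
  case False
  then have "(m - b)\<^sup>2 \<le> (m - L)\<^sup>2" using assms by (intro power_mono) auto
  then show ?thesis unfolding Mf_def by (auto simp: power2_commute)
qed

lemma aux_max: "0 \<le> (B::real) \<Longrightarrow> B \<le> max X Y \<Longrightarrow> \<bar>B - A\<bar> \<le> max (max (X - A) (Y - A)) A"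
  by (auto simp: max_def abs_if)

lemma Hbound:
  assumes "L \<le> b" "b \<le> U"
  shows "\<bar>(b - m)\<^sup>2 - (a - m)\<^sup>2\<bar> \<le> Hf L U a m"
proof -
  have "(b - m)\<^sup>2 \<le> Mf L U m" using sq_le_M assms by blast
  moreover have "0 \<le> (b - m)\<^sup>2" by simp
  ultimately show ?thesis unfolding Hf_def Mf_def by (intro aux_max)
qed

lemma Hf_nonneg: "0 \<le> Hf L U a m" unfolding Hf_def by (rule order.trans[OF zero_le_power2 max.cobounded2])

lemma moth_range:
  assumes y: "y \<in> datasets n L U" and n: "2 \<le> n" and j: "j < n"
  shows "L \<le> moth n y j" "moth n y j \<le> U"
proof -
  have ly: "length y = n" using y datasetsD by auto
  have eq: "(\<Sum>i<n. y ! i) - y ! j = (\<Sum>i\<in>{..<n} - {j}. y ! i)"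
    using j by (simp add: sum_diff1)
  have c: "card ({..<n} - {j}) = n - 1" using j by simp
  have "(\<Sum>i\<in>{..<n} - {j}. L) \<le> (\<Sum>i\<in>{..<n} - {j}. y ! i)"
    using datasetsD(2)[OF y] by (intro sum_mono) auto
  then have lo: "real (n - 1) * L \<le> (\<Sum>i<n. y ! i) - y ! j" using c eq by simp
  have "(\<Sum>i\<in>{..<n} - {j}. y ! i) \<le> (\<Sum>i\<in>{..<n} - {j}. U)"
    using datasetsD(3)[OF y] by (intro sum_mono) auto
  then have hi: "(\<Sum>i<n. y ! i) - y ! j \<le> real (n - 1) * U" using c eq by simp
  have cp: "real n - 1 > 0" using n by simp
  have rc: "real (n - 1) = real n - 1" using n by simp
  show "L \<le> moth n y j" unfolding moth_def using lo cp rc by (simp add: field_simps)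
  show "moth n y j \<le> U" unfolding moth_def using hi cp rc by (simp add: field_simps)
qed

lemma exists_neighbor:
  assumes y: "y \<in> datasets n L U" and n: "1 \<le> n" and LU: "L < U"
  shows "\<exists>z. z \<in> datasets n L U \<and> hdist y z = 1"
proof -
  define b where "b = (if y ! 0 = L then U else L)"
  have b: "L \<le> b" "b \<le> U" "b \<noteq> y ! 0" using LU unfolding b_def by auto
  have ly: "length y = n" using y datasetsD by auto
  have l0: "0 < length y" using n ly by simp
  have "{i. i < length y \<and> y ! i \<noteq> y[0 := b] ! i} = {0}" using b l0 by (auto simp: nth_list_update)
  then have "hdist y (y[0 := b]) = 1" unfolding hdist_def by simp
  then show ?thesis using datasets_upd[OF y b(1,2)] by blast
qed

definition Kf :: "nat \<Rightarrow> real" where "Kf n = (real n - 1) / (real n)\<^sup>2"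

lemma Kf_nonneg: "1 \<le> n \<Longrightarrow> 0 \<le> Kf n" unfolding Kf_def by simp

lemma diff_bound:
  assumes y: "y \<in> datasets n L U" and n: "2 \<le> n" and z: "z \<in> datasets n L U" and h: "hdist y z = 1"
  shows "\<exists>j<n. \<bar>variance y - variance z\<bar> \<le> Kf n * Hf L U (y ! j) (moth n y j)"
proof -
  obtain j where j: "j < n" "z = y[j := z ! j]" using neighbor[OF y z h] by blast
  have ly: "length y = n" using y datasetsD by auto
  have b: "L \<le> z ! j" "z ! j \<le> U" using z j datasetsD by auto
  have "\<bar>variance y - variance z\<bar> = \<bar>variance (y[j := z ! j]) - variance y\<bar>" using j by simp
  also have "\<dots> = Kf n * \<bar>(z ! j - moth n y j)\<^sup>2 - (y ! j - moth n y j)\<^sup>2\<bar>"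
    unfolding delta[OF ly n j(1)] Kf_def using n by (simp add: abs_mult)
  also have "\<dots> \<le> Kf n * Hf L U (y ! j) (moth n y j)"
    using Hbound[OF b] Kf_nonneg n by (intro mult_left_mono) auto
  finally show ?thesis using j by blast
qed

lemma LS_le:
  assumes y: "y \<in> datasets n L U" and n: "2 \<le> n" and LU: "L < U"
    and B: "\<forall>j<n. Kf n * Hf L U (y ! j) (moth n y j) \<le> B"
  shows "local_sens variance n L U y \<le> B"
  unfolding local_sens_def
proof (rule cSUP_least)
  show "{z \<in> datasets n L U. hdist y z = 1} \<noteq> {}" using exists_neighbor[OF y _ LU] n by auto
  fix z assume "z \<in> {z \<in> datasets n L U. hdist y z = 1}"
  then show "\<bar>variance y - variance z\<bar> \<le> B" using diff_bound[OF y n] B by fastforce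
qed

lemma LS_bdd:
  assumes y: "y \<in> datasets n L U" and n: "2 \<le> n"
  shows "bdd_above ((\<lambda>z. \<bar>variance y - variance z\<bar>) ` {z \<in> datasets n L U. hdist y z = 1})"
proof -
  define B where "B = (\<Sum>j<n. Kf n * Hf L U (y ! j) (moth n y j))"
  have "\<forall>j<n. Kf n * Hf L U (y ! j) (moth n y j) \<le> B"
  proof (intro allI impI)
    fix j assume "j < n"
    then show "Kf n * Hf L U (y ! j) (moth n y j) \<le> B" unfolding B_def
      using Kf_nonneg[of n] n Hf_nonneg
      by (intro member_le_sum) auto
  qed
  then show ?thesis unfolding bdd_above_def
  proof (intro exI ballI)
    fix v assume "v \<in> (\<lambda>z. \<bar>variance y - variance z\<bar>) ` {z \<in> datasets n L U. hdist y z = 1}"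
    then obtain z where z: "z \<in> datasets n L U" "hdist y z = 1" "v = \<bar>variance y - variance z\<bar>" by auto
    obtain j where "j < n" "\<bar>variance y - variance z\<bar> \<le> Kf n * Hf L U (y ! j) (moth n y j)"
      using diff_bound[OF y n z(1,2)] by blast
    then show "v \<le> B" using z(3) \<open>\<forall>j<n. Kf n * Hf L U (y ! j) (moth n y j) \<le> B\<close> by fastforce
  qed
qed

lemma LS_nonneg:
  assumes y: "y \<in> datasets n L U" and n: "2 \<le> n" and LU: "L < U"
  shows "0 \<le> local_sens variance n L U y"
proof -
  obtain z where z: "z \<in> datasets n L U" "hdist y z = 1" using exists_neighbor[OF y _ LU] n by auto
  have "\<bar>variance y - variance z\<bar> \<le> local_sens variance n L U y"
    unfolding local_sens_def using z LS_bdd[OF y n] by (intro cSUP_upper) auto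
  then show ?thesis by linarith
qed

lemma LS_ge_one:
  assumes y: "y \<in> datasets n L U" and n: "2 \<le> n" and LU: "L < U" and j: "j < n"
    and b: "L \<le> b" "b \<le> U"
  shows "Kf n * \<bar>(b - moth n y j)\<^sup>2 - (y ! j - moth n y j)\<^sup>2\<bar> \<le> local_sens variance n L U y"
proof (cases "b = y ! j")
  case True
  then show ?thesis using LS_nonneg[OF y n LU] by simp
next
  case False
  have ly: "length y = n" using y datasetsD by auto
  have zd: "y[j := b] \<in> datasets n L U" using datasets_upd[OF y b] .
  have "{i. i < length y \<and> y ! i \<noteq> y[j := b] ! i} = {j}" using False j ly by (auto simp: nth_list_update)
  then have h: "hdist y (y[j := b]) = 1" unfolding hdist_def by simp
  have "\<bar>variance y - variance (y[j := b])\<bar> = \<bar>variance (y[j := b]) - variance y\<bar>"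
    by (rule abs_minus_commute)
  also have "\<dots> = \<bar>Kf n * ((b - moth n y j)\<^sup>2 - (y ! j - moth n y j)\<^sup>2)\<bar>"
    unfolding delta[OF ly n j, of b] Kf_def ..
  also have "\<dots> = Kf n * \<bar>(b - moth n y j)\<^sup>2 - (y ! j - moth n y j)\<^sup>2\<bar>"
    using Kf_nonneg[of n] n by (simp add: abs_mult)
  finally have "Kf n * \<bar>(b - moth n y j)\<^sup>2 - (y ! j - moth n y j)\<^sup>2\<bar> = \<bar>variance y - variance (y[j := b])\<bar>" by simp
  also have "\<dots> \<le> local_sens variance n L U y"
    unfolding local_sens_def using zd h LS_bdd[OF y n] by (intro cSUP_upper) auto
  finally show ?thesis .
qed

lemma LS_ge:
  assumes y: "y \<in> datasets n L U" and n: "2 \<le> n" and LU: "L < U" and j: "j < n"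
  shows "Kf n * Hf L U (y ! j) (moth n y j) \<le> local_sens variance n L U y"
proof -
  let ?m = "moth n y j" and ?a = "y ! j" and ?LS = "local_sens variance n L U y"
  have K: "0 \<le> Kf n" using Kf_nonneg n by auto
  have mr: "L \<le> ?m" "?m \<le> U" using moth_range[OF y n j] by auto
  have t1: "Kf n * ((L - ?m)\<^sup>2 - (?a - ?m)\<^sup>2) \<le> ?LS"
    using LS_ge_one[OF y n LU j, of L] LU K by (smt (verit) abs_ge_self mult_left_mono)
  have t2: "Kf n * ((U - ?m)\<^sup>2 - (?a - ?m)\<^sup>2) \<le> ?LS"
    using LS_ge_one[OF y n LU j, of U] LU K by (smt (verit) abs_ge_self mult_left_mono)
  have t3: "Kf n * ((?a - ?m)\<^sup>2) \<le> ?LS"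
    using LS_ge_one[OF y n LU j, of ?m] mr by simp
  show ?thesis unfolding Hf_def using t1 t2 t3 K
    by (simp add: max_def)
qed

definition lo :: "nat \<Rightarrow> real \<Rightarrow> real list \<Rightarrow> nat \<Rightarrow> nat \<Rightarrow> real" where
  "lo n L xs k j = ((\<Sum>i<n. xs ! i) - xs ! j - TS n (\<lambda>i. xs ! i - L) k j) / (real n - 1)"

definition hi :: "nat \<Rightarrow> real \<Rightarrow> real list \<Rightarrow> nat \<Rightarrow> nat \<Rightarrow> real" where
  "hi n U xs k j = ((\<Sum>i<n. xs ! i) - xs ! j + TS n (\<lambda>i. U - xs ! i) k j) / (real n - 1)"

definition cterms :: "real \<Rightarrow> real \<Rightarrow> real \<Rightarrow> real \<Rightarrow> real \<Rightarrow> real \<Rightarrow> real list" where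
  "cterms L U E E1 a m = [E * ((L - m)\<^sup>2 - (a - m)\<^sup>2), E * ((U - m)\<^sup>2 - (a - m)\<^sup>2), E * (a - m)\<^sup>2,
                         E1 * (L - m)\<^sup>2, E1 * (U - m)\<^sup>2]"

definition candl :: "nat \<Rightarrow> real \<Rightarrow> real \<Rightarrow> real \<Rightarrow> real list \<Rightarrow> nat \<Rightarrow> nat \<Rightarrow> real list" where
  "candl n L U \<beta> xs k j =
     cterms L U (exp (- \<beta> * real k)) (exp (- \<beta> * real (Suc k))) (xs ! j) (lo n L xs k j)
   @ cterms L U (exp (- \<beta> * real k)) (exp (- \<beta> * real (Suc k))) (xs ! j) (hi n U xs k j)"

fun rowacc :: "(nat \<Rightarrow> nat \<Rightarrow> real list) \<Rightarrow> nat \<Rightarrow> real \<Rightarrow> nat \<Rightarrow> real" where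
  "rowacc f k a 0 = a"
| "rowacc f k a (Suc j) = foldl max (rowacc f k a j) (f k j)"

fun allacc :: "(nat \<Rightarrow> nat \<Rightarrow> real list) \<Rightarrow> nat \<Rightarrow> nat \<Rightarrow> real" where
  "allacc f n 0 = 0"
| "allacc f n (Suc k) = rowacc f k (allacc f n k) n"

lemma foldl_max_ge: "a \<le> foldl max (a::real) xs"
  by (induction xs arbitrary: a) (auto intro: order.trans[OF max.cobounded1])

lemma foldl_max_mem_ge: "v \<in> set xs \<Longrightarrow> v \<le> foldl max (a::real) xs"
proof (induction xs arbitrary: a)
  case (Cons x xs)
  then show ?case using foldl_max_ge[of "max a x" xs] by auto
qed simp

lemma foldl_max_cases: "foldl max (a::real) xs = a \<or> foldl max a xs \<in> set xs"
proof (induction xs arbitrary: a)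
  case (Cons x xs)
  from Cons[of "max a x"] show ?case by (auto simp: max_def split: if_splits)
qed simp

lemma rowacc_ge: "a \<le> rowacc f k a j"
  by (induction j) (auto intro: order.trans[OF _ foldl_max_ge])

lemma rowacc_mem_ge: "j' < j \<Longrightarrow> v \<in> set (f k j') \<Longrightarrow> v \<le> rowacc f k a j"
proof (induction j)
  case (Suc j)
  then show ?case
    by (cases "j' = j") (auto intro: order.trans[OF _ foldl_max_ge] foldl_max_mem_ge)
qed simp

lemma rowacc_cases: "rowacc f k a j = a \<or> (\<exists>j'<j. rowacc f k a j \<in> set (f k j'))"
proof (induction j)
  case (Suc j)
  then show ?case using foldl_max_cases[of "rowacc f k a j" "f k j"] by (auto simp: less_Suc_eq)
qed simp

lemma allacc_ge: "k' \<le> k \<Longrightarrow> allacc f n k' \<le> allacc f n k"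
proof (induction k)
  case (Suc k)
  then show ?case using rowacc_ge[of "allacc f n k" f k n] by (auto simp: le_Suc_eq)
qed simp

lemma allacc_mem_ge: "k' < k \<Longrightarrow> j < n \<Longrightarrow> v \<in> set (f k' j) \<Longrightarrow> v \<le> allacc f n k"
proof (induction k)
  case (Suc k)
  show ?case
  proof (cases "k' = k")
    case True
    then show ?thesis using Suc rowacc_mem_ge by simp
  next
    case False
    then have "v \<le> allacc f n k" using Suc by simp
    then show ?thesis using rowacc_ge[of "allacc f n k" f k n] by simp
  qed
qed simp

lemma allacc_cases: "allacc f n k = 0 \<or> (\<exists>k'<k. \<exists>j<n. allacc f n k \<in> set (f k' j))"
proof (induction k)
  case (Suc k)
  from rowacc_cases[of f k "allacc f n k" n] show ?case
  proof
    assume "rowacc f k (allacc f n k) n = allacc f n k"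
    then show ?case using Suc by (auto simp: less_Suc_eq)
  next
    assume "\<exists>j'<n. rowacc f k (allacc f n k) n \<in> set (f k j')"
    then show ?case by auto
  qed
qed simp

lemma conv_sq:
  fixes a m l h :: real
  assumes "l \<le> m" "m \<le> h"
  shows "(a - m)\<^sup>2 \<le> max ((a - l)\<^sup>2) ((a - h)\<^sup>2)"
proof (cases "m \<le> a")
  case True
  then have "(a - m)\<^sup>2 \<le> (a - l)\<^sup>2" using assms by (intro power_mono) auto
  then show ?thesis by simp
next
  case False
  then have "(m - a)\<^sup>2 \<le> (h - a)\<^sup>2" using assms by (intro power_mono) auto
  then show ?thesis by (simp add: power2_commute)
qed

lemma lin_sq:
  fixes a m l h P :: real
  assumes "l \<le> m" "m \<le> h"
  shows "(P - m)\<^sup>2 - (a - m)\<^sup>2 \<le> max ((P - l)\<^sup>2 - (a - l)\<^sup>2) ((P - h)\<^sup>2 - (a - h)\<^sup>2)"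
proof -
  have e: "\<And>t. (P - t)\<^sup>2 - (a - t)\<^sup>2 = (P - a) * (P + a - 2 * t)"
    by (simp add: power2_eq_square algebra_simps)
  show ?thesis
  proof (cases "0 \<le> P - a")
    case True
    then have "(P - a) * (P + a - 2 * m) \<le> (P - a) * (P + a - 2 * l)"
      using assms by (intro mult_left_mono) auto
    then show ?thesis unfolding e by simp
  next
    case False
    then have "(P - a) * (P + a - 2 * m) \<le> (P - a) * (P + a - 2 * h)"
      using assms by (intro mult_left_mono_neg) auto
    then show ?thesis unfolding e by simp
  qed
qed

lemma sum_others:
  fixes n j :: nat
  assumes "j < n"
  shows "(\<Sum>i<n. g i) - g j = (\<Sum>i\<in>{..<n} - {j}. (g i :: real))"
  using assms by (subst sum_diff1) auto

lemma moth_bounds: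
  assumes xs: "xs \<in> datasets n L U" and y: "y \<in> datasets n L U" and n: "2 \<le> n" and j: "j < n"
    and D: "D \<subseteq> {..<n} - {j}" and same: "\<forall>i<n. i \<notin> D \<and> i \<noteq> j \<longrightarrow> y ! i = xs ! i"
  shows "lo n L xs (card D) j \<le> moth n y j" "moth n y j \<le> hi n U xs (card D) j"
proof -
  let ?O = "{..<n} - {j}"
  have fD: "finite D" using D finite_subset by blast
  have kn: "card D < n"
  proof -
    have "card D \<le> card ?O" using D by (intro card_mono) auto
    then show ?thesis using j by simp
  qed
  have ys: "(\<Sum>i<n. y ! i) - y ! j = (\<Sum>i<n. xs ! i) - xs ! j - (\<Sum>i\<in>D. xs ! i - y ! i)"
  proof -
    have "(\<Sum>i\<in>?O. xs ! i - y ! i) = (\<Sum>i\<in>D. xs ! i - y ! i)"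
      using D same by (intro sum.mono_neutral_right) auto
    then show ?thesis unfolding sum_others[OF j, of "\<lambda>i. y ! i"] sum_others[OF j, of "\<lambda>i. xs ! i"]
      by (simp add: sum_subtractf)
  qed
  have nnL: "\<forall>i<n. 0 \<le> xs ! i - L" using datasetsD(2)[OF xs] by auto
  have nnU: "\<forall>i<n. 0 \<le> U - xs ! i" using datasetsD(3)[OF xs] by auto
  have "(\<Sum>i\<in>D. xs ! i - y ! i) \<le> (\<Sum>i\<in>D. xs ! i - L)"
    using D datasetsD(2)[OF y] by (intro sum_mono) auto
  also have "\<dots> \<le> TS n (\<lambda>i. xs ! i - L) (card D) j"
    using TS_max[OF nnL j kn D] by simp
  finally have b1: "(\<Sum>i\<in>D. xs ! i - y ! i) \<le> TS n (\<lambda>i. xs ! i - L) (card D) j" .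
  have "- (\<Sum>i\<in>D. xs ! i - y ! i) = (\<Sum>i\<in>D. y ! i - xs ! i)" by (simp add: sum_negf[symmetric])
  also have "\<dots> \<le> (\<Sum>i\<in>D. U - xs ! i)"
    using D datasetsD(3)[OF y] by (intro sum_mono) auto
  also have "\<dots> \<le> TS n (\<lambda>i. U - xs ! i) (card D) j"
    using TS_max[OF nnU j kn D] by simp
  finally have b2: "- (\<Sum>i\<in>D. xs ! i - y ! i) \<le> TS n (\<lambda>i. U - xs ! i) (card D) j" .
  have cp: "0 < real n - 1" using n by simp
  show "lo n L xs (card D) j \<le> moth n y j" unfolding lo_def moth_def ys
    using b1 cp by (intro divide_right_mono) auto
  show "moth n y j \<le> hi n U xs (card D) j" unfolding hi_def moth_def ys
    using b2 cp by (intro divide_right_mono) auto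
qed

lemma card_diff_lt:
  assumes "D \<subseteq> {..<n} - {j}" "j < n" shows "card D < n"
proof -
  have "card D \<le> card ({..<n} - {j})" using assms by (intro card_mono) auto
  then show ?thesis using assms by simp
qed

lemma aux_max2: "0 \<le> (A::real) \<Longrightarrow> A \<le> max X Y \<Longrightarrow> max (max (X - A) (Y - A)) A \<le> max X Y"
  by (auto simp: max_def)

lemma upper_one:
  assumes xs: "xs \<in> datasets n L U" and y: "y \<in> datasets n L U" and n: "2 \<le> n" and j: "j < n"
    and \<beta>: "0 \<le> \<beta>"
    and B: "\<forall>k<n. \<forall>v\<in>set (candl n L U \<beta> xs k j). v \<le> B"
  shows "Hf L U (y ! j) (moth n y j) * exp (- \<beta> * real (hdist xs y)) \<le> B"
proof -
  define D where "D = {i. i < n \<and> xs ! i \<noteq> y ! i}"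
  have lx: "length xs = n" using xs datasetsD by auto
  have hd: "hdist xs y = card D" unfolding hdist_def D_def lx ..
  have fD: "finite D" unfolding D_def by auto
  let ?m = "moth n y j"
  show ?thesis
  proof (cases "j \<in> D")
    case False
    have D': "D \<subseteq> {..<n} - {j}" using False unfolding D_def by auto
    have same: "\<forall>i<n. i \<notin> D \<and> i \<noteq> j \<longrightarrow> y ! i = xs ! i" unfolding D_def by auto
    have yj: "y ! j = xs ! j" using False j unfolding D_def by auto
    define k where "k = card D"
    have kn: "k < n" unfolding k_def using card_diff_lt[OF D' j] .
    have mb: "lo n L xs k j \<le> ?m" "?m \<le> hi n U xs k j"
      using moth_bounds[OF xs y n j D' same] unfolding k_def by auto
    define E where "E = exp (- \<beta> * real k)"
    have E0: "0 \<le> E" unfolding E_def by simp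
    have Bs: "\<forall>v\<in>set (candl n L U \<beta> xs k j). v \<le> B" using B kn by auto
    let ?a = "xs ! j" and ?l = "lo n L xs k j" and ?h = "hi n U xs k j"
    have c1: "E * ((L - ?m)\<^sup>2 - (?a - ?m)\<^sup>2) \<le> B"
    proof -
      have "E * ((L - ?m)\<^sup>2 - (?a - ?m)\<^sup>2) \<le> max (E * ((L - ?l)\<^sup>2 - (?a - ?l)\<^sup>2)) (E * ((L - ?h)\<^sup>2 - (?a - ?h)\<^sup>2))"
        using mult_left_mono[OF lin_sq[OF mb, of L ?a] E0] using E0 by (simp add: max_mult_distrib_left)
      then show ?thesis using Bs unfolding candl_def cterms_def E_def by auto
    qed
    have c2: "E * ((U - ?m)\<^sup>2 - (?a - ?m)\<^sup>2) \<le> B"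
    proof -
      have "E * ((U - ?m)\<^sup>2 - (?a - ?m)\<^sup>2) \<le> max (E * ((U - ?l)\<^sup>2 - (?a - ?l)\<^sup>2)) (E * ((U - ?h)\<^sup>2 - (?a - ?h)\<^sup>2))"
        using mult_left_mono[OF lin_sq[OF mb, of U ?a] E0] using E0 by (simp add: max_mult_distrib_left)
      then show ?thesis using Bs unfolding candl_def cterms_def E_def by auto
    qed
    have c3: "E * (?a - ?m)\<^sup>2 \<le> B"
    proof -
      have "E * (?a - ?m)\<^sup>2 \<le> max (E * (?a - ?l)\<^sup>2) (E * (?a - ?h)\<^sup>2)"
        using mult_left_mono[OF conv_sq[OF mb, of ?a] E0] using E0 by (simp add: max_mult_distrib_left)
      then show ?thesis using Bs unfolding candl_def cterms_def E_def by auto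
    qed
    have "Hf L U (y ! j) ?m * E \<le> B"
      unfolding Hf_def yj using c1 c2 c3 E0 by (simp add: max_mult_distrib_right mult.commute)
    then show ?thesis unfolding hd E_def k_def .
  next
    case True
    define D' where "D' = D - {j}"
    have D': "D' \<subseteq> {..<n} - {j}" unfolding D'_def D_def by auto
    have same: "\<forall>i<n. i \<notin> D' \<and> i \<noteq> j \<longrightarrow> y ! i = xs ! i" unfolding D'_def D_def by auto
    define k where "k = card D'"
    have kn: "k < n" unfolding k_def using card_diff_lt[OF D' j] .
    have "card D > 0" using True fD card_gt_0_iff by blast
    then have cD: "card D = Suc k" unfolding k_def D'_def using True fD by (simp add: card_Diff_singleton)
    have mb: "lo n L xs k j \<le> ?m" "?m \<le> hi n U xs k j"
      using moth_bounds[OF xs y n j D' same] unfolding k_def by auto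
    define E where "E = exp (- \<beta> * real (Suc k))"
    have E0: "0 \<le> E" unfolding E_def by simp
    have Bs: "\<forall>v\<in>set (candl n L U \<beta> xs k j). v \<le> B" using B kn by auto
    let ?l = "lo n L xs k j" and ?h = "hi n U xs k j"
    have yb: "L \<le> y ! j" "y ! j \<le> U" using datasetsD(2,3)[OF y j] by auto
    have HM: "Hf L U (y ! j) ?m \<le> Mf L U ?m"
      using sq_le_M[OF yb, of ?m] aux_max2[OF zero_le_power2[of "y ! j - ?m"]] unfolding Hf_def Mf_def by blast
    have c1: "E * (L - ?m)\<^sup>2 \<le> B"
    proof -
      have "E * (L - ?m)\<^sup>2 \<le> max (E * (L - ?l)\<^sup>2) (E * (L - ?h)\<^sup>2)"
        using mult_left_mono[OF conv_sq[OF mb, of L] E0] using E0 by (simp add: max_mult_distrib_left)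
      then show ?thesis using Bs unfolding candl_def cterms_def E_def by auto
    qed
    have c2: "E * (U - ?m)\<^sup>2 \<le> B"
    proof -
      have "E * (U - ?m)\<^sup>2 \<le> max (E * (U - ?l)\<^sup>2) (E * (U - ?h)\<^sup>2)"
        using mult_left_mono[OF conv_sq[OF mb, of U] E0] using E0 by (simp add: max_mult_distrib_left)
      then show ?thesis using Bs unfolding candl_def cterms_def E_def by auto
    qed
    have "Mf L U ?m * E \<le> B"
      unfolding Mf_def using c1 c2 E0 by (simp add: max_mult_distrib_right mult.commute)
    then have "Hf L U (y ! j) ?m * E \<le> B"
      using mult_right_mono[OF HM E0] by linarith
    then show ?thesis unfolding hd cD E_def .
  qed
qed


lemma moth_eq:
  fixes xs y :: "real list"
  assumes lx: "length xs = n" and j: "j < n"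
    and D: "D \<subseteq> {..<n} - {j}" and same: "\<forall>i<n. i \<notin> D \<and> i \<noteq> j \<longrightarrow> y ! i = xs ! i"
  shows "(\<Sum>i<n. y ! i) - y ! j = (\<Sum>i<n. xs ! i) - xs ! j - (\<Sum>i\<in>D. xs ! i - y ! i)"
proof -
  have "(\<Sum>i\<in>{..<n} - {j}. xs ! i - y ! i) = (\<Sum>i\<in>D. xs ! i - y ! i)"
    using D same by (intro sum.mono_neutral_right) auto
  then show ?thesis unfolding sum_others[OF j, of "\<lambda>i. y ! i"] sum_others[OF j, of "\<lambda>i. xs ! i"]
    by (simp add: sum_subtractf)
qed

definition mky :: "nat \<Rightarrow> real list \<Rightarrow> nat set \<Rightarrow> real \<Rightarrow> real list" where
  "mky n xs T P = map (\<lambda>i. if i \<in> T then P else xs ! i) [0..<n]"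

lemma mky_props:
  assumes xs: "xs \<in> datasets n L U" and j: "j < n" and T: "T \<subseteq> {..<n} - {j}"
    and P: "L \<le> P" "P \<le> U"
  shows "mky n xs T P \<in> datasets n L U" "mky n xs T P ! j = xs ! j"
        "hdist xs (mky n xs T P) \<le> card T"
        "(\<Sum>i<n. mky n xs T P ! i) - mky n xs T P ! j = (\<Sum>i<n. xs ! i) - xs ! j - (\<Sum>i\<in>T. xs ! i - P)"
proof -
  have lx: "length xs = n" using xs datasetsD by auto
  let ?y = "mky n xs T P"
  have ly: "length ?y = n" unfolding mky_def by simp
  have yi: "\<And>i. i < n \<Longrightarrow> ?y ! i = (if i \<in> T then P else xs ! i)" unfolding mky_def by simp
  show "?y \<in> datasets n L U" unfolding datasets_def using ly yi P datasetsD(2,3)[OF xs] by auto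
  show "?y ! j = xs ! j" using yi j T by auto
  have fT: "finite T" using T finite_subset by blast
  have "{i. i < length xs \<and> xs ! i \<noteq> ?y ! i} \<subseteq> T" using yi lx by (auto split: if_splits)
  then show "hdist xs ?y \<le> card T" unfolding hdist_def using fT by (intro card_mono) auto
  have same: "\<forall>i<n. i \<notin> T \<and> i \<noteq> j \<longrightarrow> ?y ! i = xs ! i" using yi by auto
  have "(\<Sum>i\<in>T. xs ! i - ?y ! i) = (\<Sum>i\<in>T. xs ! i - P)" using yi T by (intro sum.cong) auto
  then show "(\<Sum>i<n. ?y ! i) - ?y ! j = (\<Sum>i<n. xs ! i) - xs ! j - (\<Sum>i\<in>T. xs ! i - P)"
    using moth_eq[OF lx j T same] by simp
qed

lemma attain:
  assumes xs: "xs \<in> datasets n L U" and n: "2 \<le> n" and LU: "L < U" and \<beta>: "0 \<le> \<beta>" and j: "j < n"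
    and y: "y \<in> datasets n L U" and yj: "y ! j = xs ! j" and hd: "hdist xs y \<le> k"
    and bdd: "bdd_above ((\<lambda>y. local_sens variance n L U y * exp (- \<beta> * real (hdist xs y))) ` datasets n L U)"
  shows "\<forall>v \<in> set (cterms L U (exp (- \<beta> * real k)) (exp (- \<beta> * real (Suc k))) (xs ! j) (moth n y j)).
           Kf n * v \<le> smooth_sens variance \<beta> n L U xs"
proof -
  let ?SS = "smooth_sens variance \<beta> n L U xs"
  let ?m = "moth n y j" and ?a = "xs ! j"
  define E where "E = exp (- \<beta> * real k)"
  define E1 where "E1 = exp (- \<beta> * real (Suc k))"
  have K: "0 \<le> Kf n" using Kf_nonneg n by simp
  have E0: "0 \<le> E" "0 \<le> E1" unfolding E_def E1_def by auto
  have gen: "local_sens variance n L U z * exp (- \<beta> * real k') \<le> ?SS"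
    if z: "z \<in> datasets n L U" and hz: "hdist xs z \<le> k'" for z k'
  proof -
    have "exp (- \<beta> * real k') \<le> exp (- \<beta> * real (hdist xs z))"
      using hz \<beta> by (simp add: mult_left_mono)
    then have "local_sens variance n L U z * exp (- \<beta> * real k') \<le>
          local_sens variance n L U z * exp (- \<beta> * real (hdist xs z))"
      using LS_nonneg[OF z n LU] by (intro mult_left_mono) auto
    also have "\<dots> \<le> ?SS" unfolding smooth_sens_def using z bdd by (intro cSUP_upper) auto
    finally show ?thesis .
  qed
  have H1: "Kf n * Hf L U ?a ?m * E \<le> ?SS"
  proof -
    have "Kf n * Hf L U ?a ?m \<le> local_sens variance n L U y" using LS_ge[OF y n LU j] yj by simp
    then have "Kf n * Hf L U ?a ?m * E \<le> local_sens variance n L U y * E"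
      using E0 by (intro mult_right_mono) auto
    then show ?thesis using gen[OF y hd] unfolding E_def by linarith
  qed
  have mr: "L \<le> ?m" "?m \<le> U" using moth_range[OF y n j] by auto
  define y' where "y' = y[j := ?m]"
  have y': "y' \<in> datasets n L U" unfolding y'_def using datasets_upd[OF y mr] .
  have ly: "length y = n" using y datasetsD by auto
  have y'j: "y' ! j = ?m" unfolding y'_def using j ly by simp
  have my': "moth n y' j = ?m"
  proof -
    have "(\<Sum>i<n. y' ! i) = (\<Sum>i<n. y ! i) - y ! j + ?m"
      unfolding y'_def using sum_upd[OF j ly, of "\<lambda>x. x"] by simp
    then have "(\<Sum>i<n. y' ! i) - y' ! j = (\<Sum>i<n. y ! i) - y ! j" using y'j by simp
    then show ?thesis unfolding moth_def by simp
  qed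
  have hd': "hdist xs y' \<le> Suc k"
  proof -
    have lx: "length xs = n" using xs datasetsD by auto
    have "{i. i < length xs \<and> xs ! i \<noteq> y' ! i} \<subseteq> insert j {i. i < length xs \<and> xs ! i \<noteq> y ! i}"
      unfolding y'_def using ly lx by (auto simp: nth_list_update)
    then have "hdist xs y' \<le> card (insert j {i. i < length xs \<and> xs ! i \<noteq> y ! i})"
      unfolding hdist_def by (intro card_mono) auto
    also have "\<dots> \<le> Suc (hdist xs y)" unfolding hdist_def by (simp add: card_insert_le_m1 card_insert_if)
    finally show ?thesis using hd by simp
  qed
  have H2: "Kf n * Hf L U ?m ?m * E1 \<le> ?SS"
  proof -
    have "Kf n * Hf L U ?m ?m \<le> local_sens variance n L U y'" using LS_ge[OF y' n LU j] y'j my' by simp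
    then have "Kf n * Hf L U ?m ?m * E1 \<le> local_sens variance n L U y' * E1"
      using E0 by (intro mult_right_mono) auto
    then show ?thesis using gen[OF y' hd'] unfolding E1_def by linarith
  qed
  have KE: "0 \<le> Kf n * E" "0 \<le> Kf n * E1" using K E0 by auto
  have "\<And>t. t \<le> Hf L U ?a ?m \<Longrightarrow> Kf n * (E * t) \<le> ?SS"
  proof -
    fix t assume "t \<le> Hf L U ?a ?m"
    then have "Kf n * E * t \<le> Kf n * E * Hf L U ?a ?m" using KE by (intro mult_left_mono) auto
    then show "Kf n * (E * t) \<le> ?SS" using H1 by (simp add: algebra_simps)
  qed
  moreover have "\<And>t. t \<le> Hf L U ?m ?m \<Longrightarrow> Kf n * (E1 * t) \<le> ?SS"
  proof -
    fix t assume "t \<le> Hf L U ?m ?m"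
    then have "Kf n * E1 * t \<le> Kf n * E1 * Hf L U ?m ?m" using KE by (intro mult_left_mono) auto
    then show "Kf n * (E1 * t) \<le> ?SS" using H2 by (simp add: algebra_simps)
  qed
  ultimately show ?thesis unfolding cterms_def E_def[symmetric] E1_def[symmetric] Hf_def
    by auto
qed


lemma var_one: "length y = 1 \<Longrightarrow> variance y = 0"
  unfolding variance_def mean_def by simp

theorem SS_formula:
  assumes xs: "xs \<in> datasets n L U" and n: "1 \<le> n" and LU: "L < U" and \<beta>: "0 \<le> \<beta>"
  shows "smooth_sens variance \<beta> n L U xs = Kf n * allacc (candl n L U \<beta> xs) n n"
proof (cases "n = 1")
  case True
  have LS0: "local_sens variance n L U y = 0" if y: "y \<in> datasets n L U" for y
  proof -
    obtain z where z: "z \<in> datasets n L U" "hdist y z = 1" using exists_neighbor[OF y n LU] by blast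
    have "\<bar>variance y - variance z\<bar> = 0" if "z \<in> datasets n L U" for z
    proof -
      have "length z = 1" "length y = 1" using that y True datasetsD(1) by auto
      then show ?thesis using var_one by simp
    qed
    then have "local_sens variance n L U y = (SUP z\<in>{z \<in> datasets n L U. hdist y z = 1}. 0)"
      unfolding local_sens_def by (intro SUP_cong) auto
    also have "\<dots> = 0" using z by (intro cSUP_const) auto
    finally show ?thesis .
  qed
  have "smooth_sens variance \<beta> n L U xs = (SUP y\<in>datasets n L U. 0)"
    unfolding smooth_sens_def using LS0 by (intro SUP_cong) auto
  also have "\<dots> = 0" using xs by (intro cSUP_const) auto
  finally show ?thesis using True unfolding Kf_def by simp
next
  case False
  then have n2: "2 \<le> n" using n by simp
  define f where "f = candl n L U \<beta> xs"
  define Best where "Best = allacc f n n"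
  let ?SS = "smooth_sens variance \<beta> n L U xs"
  have K: "0 \<le> Kf n" using Kf_nonneg n by simp
  have Bmem: "\<forall>k<n. \<forall>v\<in>set (candl n L U \<beta> xs k j). v \<le> Best" if "j < n" for j
    unfolding Best_def f_def using allacc_mem_ge that by blast
  have up: "local_sens variance n L U y * exp (- \<beta> * real (hdist xs y)) \<le> Kf n * Best"
    if y: "y \<in> datasets n L U" for y
  proof -
    define E where "E = exp (- \<beta> * real (hdist xs y))"
    have E0: "0 < E" unfolding E_def by simp
    have "local_sens variance n L U y \<le> Kf n * Best / E"
    proof (rule LS_le[OF y n2 LU], intro allI impI)
      fix j assume j: "j < n"
      have "Hf L U (y ! j) (moth n y j) * E \<le> Best"
        using upper_one[OF xs y n2 j \<beta> Bmem[OF j]] unfolding E_def .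
      then have "Hf L U (y ! j) (moth n y j) \<le> Best / E" using E0 by (simp add: field_simps)
      then have "Kf n * Hf L U (y ! j) (moth n y j) \<le> Kf n * (Best / E)" using K by (intro mult_left_mono)
      then show "Kf n * Hf L U (y ! j) (moth n y j) \<le> Kf n * Best / E" by simp
    qed
    then have "local_sens variance n L U y * E \<le> Kf n * Best" using E0 by (simp add: field_simps)
    then show ?thesis unfolding E_def .
  qed
  have bdd: "bdd_above ((\<lambda>y. local_sens variance n L U y * exp (- \<beta> * real (hdist xs y))) ` datasets n L U)"
    using up unfolding bdd_above_def by blast
  have le: "?SS \<le> Kf n * Best"
    unfolding smooth_sens_def using xs up by (intro cSUP_least) auto
  have SS0: "0 \<le> ?SS"
  proof -
    have "0 \<le> local_sens variance n L U xs * exp (- \<beta> * real (hdist xs xs))"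
      using LS_nonneg[OF xs n2 LU] by simp
    also have "\<dots> \<le> ?SS" unfolding smooth_sens_def using xs bdd by (intro cSUP_upper) auto
    finally show ?thesis .
  qed
  have lx: "length xs = n" using xs datasetsD by auto
  have ge: "Kf n * Best \<le> ?SS"
  proof -
    from allacc_cases[of f n n] show ?thesis
    proof
      assume "allacc f n n = 0"
      then show ?thesis using SS0 unfolding Best_def by simp
    next
      assume "\<exists>k'<n. \<exists>j<n. allacc f n n \<in> set (f k' j)"
      then obtain k j where kj: "k < n" "j < n" "Best \<in> set (candl n L U \<beta> xs k j)"
        unfolding Best_def f_def by blast
      have nnL: "\<forall>i<n. 0 \<le> xs ! i - L" using datasetsD(2)[OF xs] by auto
      have nnU: "\<forall>i<n. 0 \<le> U - xs ! i" using datasetsD(3)[OF xs] by auto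
      have cp: "real n - 1 \<noteq> 0" using n2 by simp
      define TL where "TL = topset n (\<lambda>i. xs ! i - L) k j"
      define TU where "TU = topset n (\<lambda>i. U - xs ! i) k j"
      have TLp: "TL \<subseteq> {..<n} - {j}" "card TL = k" "sum (\<lambda>i. xs ! i - L) TL = TS n (\<lambda>i. xs ! i - L) k j"
        unfolding TL_def using topset_props[OF kj(2,1)] by auto
      have TUp: "TU \<subseteq> {..<n} - {j}" "card TU = k" "sum (\<lambda>i. U - xs ! i) TU = TS n (\<lambda>i. U - xs ! i) k j"
        unfolding TU_def using topset_props[OF kj(2,1)] by auto
      define yl where "yl = mky n xs TL L"
      define yh where "yh = mky n xs TU U"
      have LL: "L \<le> L" "L \<le> U" "U \<le> U" using LU by auto
      note pl = mky_props[OF xs kj(2) TLp(1) LL(1,2), folded yl_def]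
      note ph = mky_props[OF xs kj(2) TUp(1) LL(2,3), folded yh_def]
      have ml: "moth n yl kj = lo n L xs k j" if "kj = j" for kj
        unfolding moth_def lo_def that pl(4) TLp(3) ..
      have "(\<Sum>i\<in>TU. xs ! i - U) = - TS n (\<lambda>i. U - xs ! i) k j"
        unfolding TUp(3)[symmetric] by (simp add: sum_negf[symmetric])
      then have mh: "moth n yh j = hi n U xs k j"
        unfolding moth_def hi_def ph(4) by simp
      have al: "\<forall>v\<in>set (cterms L U (exp (- \<beta> * real k)) (exp (- \<beta> * real (Suc k))) (xs ! j) (lo n L xs k j)).
           Kf n * v \<le> ?SS"
        using attain[OF xs n2 LU \<beta> kj(2) pl(1) pl(2) _ bdd] pl(3) TLp(2) ml[OF refl] by simp
      have ah: "\<forall>v\<in>set (cterms L U (exp (- \<beta> * real k)) (exp (- \<beta> * real (Suc k))) (xs ! j) (hi n U xs k j)).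
           Kf n * v \<le> ?SS"
        using attain[OF xs n2 LU \<beta> kj(2) ph(1) ph(2) _ bdd] ph(3) TUp(2) mh by simp
      show ?thesis using kj(3) al ah unfolding candl_def by auto
    qed
  qed
  show ?thesis using le ge unfolding Best_def f_def by simp
qed

definition exec :: "com \<Rightarrow> state \<Rightarrow> nat \<Rightarrow> state \<Rightarrow> bool" where
  "exec c s T s' \<longleftrightarrow> (\<exists>t. big c s t s' \<and> t \<le> T)"

lemma exec_mono: "exec c s T s' \<Longrightarrow> T \<le> T' \<Longrightarrow> exec c s T' s'"
  unfolding exec_def by auto

lemma exec_Seq: "exec c1 s T1 sm \<Longrightarrow> exec c2 sm T2 sn \<Longrightarrow> exec (Seq c1 c2) s (T1 + T2) sn"
  unfolding exec_def by (auto intro!: add_mono intro: big.Seq)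

lemma exec_SKIP: "exec SKIP s 1 s"
  unfolding exec_def by (auto intro: big.Skip)

lemma exec_NAssign: "exec (NAssign i a) (I, R) 1 (I(i := aval a I), R)"
  unfolding exec_def by (auto intro: big.NAssign)

lemma exec_RStore: "exec (RStore a e) (I, R) 1 (I, R(aval a I := rval e (I, R)))"
  unfolding exec_def by (auto intro: big.RStore)

lemma exec_If: "exec c1 s T sm \<Longrightarrow> exec c2 s T sn \<Longrightarrow>
   exec (If b c1 c2) s (T + 1) (if bval b s then sm else sn)"
  unfolding exec_def by (cases "bval b s") (auto intro: big.IfT big.IfF)

lemma exec_IfT: "bval b s \<Longrightarrow> exec c1 s T sm \<Longrightarrow> exec (If b c1 c2) s (T + 1) sm"
  unfolding exec_def by (auto intro: big.IfT)

lemma exec_IfF: "\<not> bval b s \<Longrightarrow> exec c2 s T sm \<Longrightarrow> exec (If b c1 c2) s (T + 1) sm"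
  unfolding exec_def by (auto intro: big.IfF)

lemma exec_While:
  assumes body: "\<And>i. ist \<le> i \<Longrightarrow> i < N \<Longrightarrow> bval b (st i) \<and> exec c (st i) T (st (Suc i))"
    and stop: "\<not> bval b (st N)" and le: "ist \<le> N"
  shows "exec (While b c) (st ist) ((N - ist) * (T + 1) + 1) (st N)"
proof -
  have "\<forall>i. ist \<le> i \<and> N - i = d \<longrightarrow> i \<le> N \<longrightarrow> exec (While b c) (st i) (d * (T + 1) + 1) (st N)" for d
  proof (induction d)
    case 0
    show ?case
    proof (intro allI impI)
      fix i assume "ist \<le> i \<and> N - i = 0" "i \<le> N"
      then have "i = N" by auto
      then show "exec (While b c) (st i) (0 * (T + 1) + 1) (st N)"
        using stop unfolding exec_def by (auto intro: big.WhileF)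
    qed
  next
    case (Suc d)
    show ?case
    proof (intro allI impI)
      fix i assume a: "ist \<le> i \<and> N - i = Suc d" "i \<le> N"
      then have iN: "i < N" by auto
      from body[OF _ iN] a obtain t1 where t1: "big c (st i) t1 (st (Suc i))" "t1 \<le> T" "bval b (st i)"
        unfolding exec_def by auto
      have "N - Suc i = d" using a by auto
      with Suc[rule_format, of "Suc i"] a iN obtain t2 where
        t2: "big (While b c) (st (Suc i)) t2 (st N)" "t2 \<le> d * (T + 1) + 1"
        unfolding exec_def by auto
      have "big (While b c) (st i) (t1 + t2 + 1) (st N)" using t1 t2 by (intro big.WhileT)
      moreover have "t1 + t2 + 1 \<le> Suc d * (T + 1) + 1" using t1 t2 by simp
      ultimately show "exec (While b c) (st i) (Suc d * (T + 1) + 1) (st N)"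
        unfolding exec_def by blast
    qed
  qed
  then show ?thesis using le by blast
qed

definition regv :: "nat \<Rightarrow> nat \<Rightarrow> nat \<Rightarrow> nat \<Rightarrow> nat \<Rightarrow> nat \<Rightarrow> nat" where
  "regv n k j l c = (\<lambda>i. if i = 0 then n else if i = 1 then k else if i = 2 then j
                        else if i = 3 then l else if i = 4 then c else 0)"

lemma regv_simps[simp]:
  "regv n k j l c 0 = n" "regv n k j l c (Suc 0) = k" "regv n k j l c 1 = k" "regv n k j l c 2 = j"
  "regv n k j l c 3 = l" "regv n k j l c 4 = c"
  "(regv n k j l c)(Suc 0 := v) = regv n v j l c"
  "(regv n k j l c)(1 := v) = regv n v j l c"
  "(regv n k j l c)(2 := v) = regv n k v l c"
  "(regv n k j l c)(3 := v) = regv n k j v c"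
  "(regv n k j l c)(4 := v) = regv n k j l v"
  unfolding regv_def by (auto intro!: ext)

definition scv :: "real \<Rightarrow> real \<Rightarrow> real \<Rightarrow> real \<Rightarrow> real \<Rightarrow> real \<Rightarrow> real \<Rightarrow> real \<Rightarrow> nat \<Rightarrow> real" where
  "scv s a p1 p2 q1 q2 l h = (\<lambda>c. if c = 0 then s else if c = 1 then a else if c = 2 then p1
     else if c = 3 then p2 else if c = 4 then q1 else if c = 5 then q2 else if c = 6 then l
     else if c = 7 then h else 0)"

lemma scv_simps[simp]:
  "scv s a p1 p2 q1 q2 l h 0 = s" "scv s a p1 p2 q1 q2 l h (Suc 0) = a" "scv s a p1 p2 q1 q2 l h 1 = a"
  "scv s a p1 p2 q1 q2 l h 2 = p1" "scv s a p1 p2 q1 q2 l h 3 = p2"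
  "scv s a p1 p2 q1 q2 l h 4 = q1" "scv s a p1 p2 q1 q2 l h 5 = q2"
  "scv s a p1 p2 q1 q2 l h 6 = l" "scv s a p1 p2 q1 q2 l h 7 = h"
  "(scv s a p1 p2 q1 q2 l h)(0 := v) = scv v a p1 p2 q1 q2 l h"
  "(scv s a p1 p2 q1 q2 l h)(Suc 0 := v) = scv s v p1 p2 q1 q2 l h"
  "(scv s a p1 p2 q1 q2 l h)(1 := v) = scv s v p1 p2 q1 q2 l h"
  "(scv s a p1 p2 q1 q2 l h)(2 := v) = scv s a v p2 q1 q2 l h"
  "(scv s a p1 p2 q1 q2 l h)(3 := v) = scv s a p1 v q1 q2 l h"
  "(scv s a p1 p2 q1 q2 l h)(4 := v) = scv s a p1 p2 v q2 l h"
  "(scv s a p1 p2 q1 q2 l h)(5 := v) = scv s a p1 p2 q1 v l h"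
  "(scv s a p1 p2 q1 q2 l h)(6 := v) = scv s a p1 p2 q1 q2 v h"
  "(scv s a p1 p2 q1 q2 l h)(7 := v) = scv s a p1 p2 q1 q2 l v"
  unfolding scv_def by (auto intro!: ext)

definition mem :: "nat \<Rightarrow> real \<Rightarrow> real \<Rightarrow> real \<Rightarrow> real list \<Rightarrow> (nat \<Rightarrow> real) \<Rightarrow> (nat \<Rightarrow> real)
   \<Rightarrow> (nat \<Rightarrow> real) \<Rightarrow> nat \<Rightarrow> real" where
  "mem n L U \<beta> xs fl fu sc = (\<lambda>a. if a = 0 then L else if a = 1 then U else if a = 2 then \<beta>
     else if a < 3 + n then xs ! (a - 3)
     else if a < 3 + 2 * n then fl (a - (3 + n))
     else if a < 3 + 3 * n then fu (a - (3 + 2 * n))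
     else sc (a - (3 + 3 * n)))"

definition xadr :: "nat \<Rightarrow> nat" where "xadr j = 3 + j"
definition radr :: "nat \<Rightarrow> nat \<Rightarrow> nat" where "radr n j = 3 + n + j"
definition uadr :: "nat \<Rightarrow> nat \<Rightarrow> nat" where "uadr n j = 3 + 2 * n + j"
definition sadr :: "nat \<Rightarrow> nat \<Rightarrow> nat" where "sadr n c = 3 * n + 3 + c"

lemma mem_simps[simp]:
  "mem n L U \<beta> xs fl fu sc 0 = L"
  "mem n L U \<beta> xs fl fu sc (Suc 0) = U"
  "mem n L U \<beta> xs fl fu sc 1 = U"
  "mem n L U \<beta> xs fl fu sc 2 = \<beta>"
  "j < n \<Longrightarrow> mem n L U \<beta> xs fl fu sc (xadr j) = xs ! j"
  "j < n \<Longrightarrow> mem n L U \<beta> xs fl fu sc (radr n j) = fl j"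
  "j < n \<Longrightarrow> mem n L U \<beta> xs fl fu sc (uadr n j) = fu j"
  "mem n L U \<beta> xs fl fu sc (sadr n c) = sc c"
  unfolding mem_def xadr_def radr_def uadr_def sadr_def by auto

lemma mem_store[simp]:
  "j < n \<Longrightarrow> (mem n L U \<beta> xs fl fu sc)(radr n j := v) = mem n L U \<beta> xs (fl(j := v)) fu sc"
  "j < n \<Longrightarrow> (mem n L U \<beta> xs fl fu sc)(uadr n j := v) = mem n L U \<beta> xs fl (fu(j := v)) sc"
  "(mem n L U \<beta> xs fl fu sc)(sadr n c := v) = mem n L U \<beta> xs fl fu (sc(c := v))"
proof -
  assume j: "j < n"
  show "(mem n L U \<beta> xs fl fu sc)(radr n j := v) = mem n L U \<beta> xs (fl(j := v)) fu sc"
  proof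
    fix a show "((mem n L U \<beta> xs fl fu sc)(radr n j := v)) a = mem n L U \<beta> xs (fl(j := v)) fu sc a"
      using j unfolding mem_def radr_def by (cases "a = 3 + n + j") auto
  qed
next
  assume j: "j < n"
  show "(mem n L U \<beta> xs fl fu sc)(uadr n j := v) = mem n L U \<beta> xs fl (fu(j := v)) sc"
  proof
    fix a show "((mem n L U \<beta> xs fl fu sc)(uadr n j := v)) a = mem n L U \<beta> xs fl (fu(j := v)) sc a"
      using j unfolding mem_def uadr_def by (cases "a = 3 + 2 * n + j") auto
  qed
next
  show "(mem n L U \<beta> xs fl fu sc)(sadr n c := v) = mem n L U \<beta> xs fl fu (sc(c := v))"
  proof
    fix a show "((mem n L U \<beta> xs fl fu sc)(sadr n c := v)) a = mem n L U \<beta> xs fl fu (sc(c := v)) a"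
      unfolding mem_def sadr_def by (cases "a = 3 * n + 3 + c") auto
  qed
qed

definition zf :: "nat \<Rightarrow> real" where "zf = (\<lambda>_. 0)"

lemma init_eq:
  assumes "length xs = n"
  shows "init_state n L U \<beta> xs = (regv n 0 0 0 0, mem n L U \<beta> xs zf zf (scv 0 0 0 0 0 0 0 0))"
proof -
  have r: "(\<lambda>i. if i = 0 then n else 0) = regv n 0 0 0 0" unfolding regv_def by (auto intro!: ext)
  have m: "(\<lambda>a. if a = 0 then L else if a = 1 then U else if a = 2 then \<beta>
            else if 3 \<le> a \<and> a - 3 < length xs then xs ! (a - 3) else 0) = mem n L U \<beta> xs zf zf (scv 0 0 0 0 0 0 0 0)"
  proof
    fix a
    show "(if a = 0 then L else if a = 1 then U else if a = 2 then \<beta>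
            else if 3 \<le> a \<and> a - 3 < length xs then xs ! (a - 3) else 0) = mem n L U \<beta> xs zf zf (scv 0 0 0 0 0 0 0 0) a"
    proof (cases "a < 3")
      case True then show ?thesis unfolding mem_def by (cases "a = 0"; cases "a = 1") auto
    next
      case False
      then show ?thesis unfolding mem_def zf_def scv_def using assms by auto
    qed
  qed
  show ?thesis unfolding init_state_def r m ..
qed

definition xa :: "aexp \<Rightarrow> aexp" where "xa a = NAdd (NConst 3) a"
definition rla :: "aexp \<Rightarrow> aexp" where "rla a = NAdd (NAdd (NConst 3) (NReg 0)) a"
definition rua :: "aexp \<Rightarrow> aexp" where "rua a = NAdd (NAdd (NConst 3) (NMul (NConst 2) (NReg 0))) a"
definition sca :: "nat \<Rightarrow> aexp" where "sca c = NAdd (NAdd (NMul (NConst 3) (NReg 0)) (NConst 3)) (NConst c)"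

lemma aval_adr[simp]:
  "aval (xa a) I = xadr (aval a I)"
  "aval (rla a) I = radr (I 0) (aval a I)"
  "aval (rua a) I = uadr (I 0) (aval a I)"
  "aval (sca c) I = sadr (I 0) c"
  unfolding xa_def rla_def rua_def sca_def xadr_def radr_def uadr_def sadr_def by simp_all

definition BOr :: "bexp \<Rightarrow> bexp \<Rightarrow> bexp" where "BOr a b = BNot (BAnd (BNot a) (BNot b))"
lemma bval_BOr[simp]: "bval (BOr a b) s = (bval a s \<or> bval b s)" unfolding BOr_def by simp

definition inc :: "nat \<Rightarrow> com" where "inc r = NAssign r (NAdd (NReg r) (NConst 1))"
definition ldx :: "aexp \<Rightarrow> rexp" where "ldx a = RLoad (xa a)"
definition keyL :: "aexp \<Rightarrow> rexp" where "keyL a = RSub (ldx a) (RLoad (NConst 0))"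
definition keyU :: "aexp \<Rightarrow> rexp" where "keyU a = RSub (RLoad (NConst 1)) (ldx a)"
definition ltn :: "nat \<Rightarrow> bexp" where "ltn r = BNLess (NReg r) (NReg 0)"

lemma exec_inc: "exec (inc r) (I, R) 1 (I(r := Suc (I r)), R)"
  unfolding inc_def using exec_NAssign[of r "NAdd (NReg r) (NConst 1)" I R] by simp

lemma exec_inc_regv[simp]:
  "exec (inc 1) (regv n k j l c, R) 1 (regv n (Suc k) j l c, R)"
  "exec (inc 2) (regv n k j l c, R) 1 (regv n k (Suc j) l c, R)"
  "exec (inc 3) (regv n k j l c, R) 1 (regv n k j (Suc l) c, R)"
  "exec (inc 4) (regv n k j l c, R) 1 (regv n k j l (Suc c), R)"
  using exec_inc[of 1 "regv n k j l c" R] exec_inc[of 2 "regv n k j l c" R]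
    exec_inc[of 3 "regv n k j l c" R] exec_inc[of 4 "regv n k j l c" R] by simp_all

lemma exec_inc_regv'[simp]:
  "exec (inc 1) (regv n k j l c, R) (Suc 0) (regv n (Suc k) j l c, R)"
  "exec (inc 2) (regv n k j l c, R) (Suc 0) (regv n k (Suc j) l c, R)"
  "exec (inc 3) (regv n k j l c, R) (Suc 0) (regv n k j (Suc l) c, R)"
  "exec (inc 4) (regv n k j l c, R) (Suc 0) (regv n k j l (Suc c), R)"
  using exec_inc_regv by simp_all

lemma exec_atoms[simp]:
  "s' = (I(i := aval a I), R) \<Longrightarrow> 1 \<le> T \<Longrightarrow> exec (NAssign i a) (I, R) T s'"
  "s' = (I, R(aval a I := rval e (I, R))) \<Longrightarrow> 1 \<le> T \<Longrightarrow> exec (RStore a e) (I, R) T s'"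
  "s' = (I(r := Suc (I r)), R) \<Longrightarrow> 1 \<le> T \<Longrightarrow> exec (inc r) (I, R) T s'"
  "s' = s \<Longrightarrow> 1 \<le> T \<Longrightarrow> exec SKIP s T s'"
  using exec_mono[OF exec_NAssign] exec_mono[OF exec_RStore] exec_mono[OF exec_inc] exec_mono[OF exec_SKIP]
  by auto

context
  fixes n :: nat and L U \<beta> :: real and xs :: "real list"
begin

abbreviation "MM \<equiv> mem n L U \<beta> xs"

lemma rval_ldx[simp]: "aval a I < n \<Longrightarrow> rval (ldx a) (I, MM fl fu sc) = xs ! aval a I"
  unfolding ldx_def by simp

lemma rval_keyL[simp]: "aval a I < n \<Longrightarrow> rval (keyL a) (I, MM fl fu sc) = xs ! aval a I - L"
  unfolding keyL_def by simp

lemma rval_keyU[simp]: "aval a I < n \<Longrightarrow> rval (keyU a) (I, MM fl fu sc) = U - xs ! aval a I"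
  unfolding keyU_def by simp

definition SUMP :: com where
  "SUMP = Seq (RStore (sca 0) (RConst 0)) (Seq (NAssign 2 (NConst 0))
     (Seq (While (ltn 2) (Seq (RStore (sca 0) (RAdd (RLoad (sca 0)) (ldx (NReg 2)))) (inc 2)))
          (NAssign 2 (NConst 0))))"

lemma exec_SUMP:
  "exec SUMP (regv n 0 0 0 0, MM fl fu (scv s0 0 0 0 0 0 0 0)) (3 * n + 4)
     (regv n 0 0 0 0, MM fl fu (scv (\<Sum>t<n. xs ! t) 0 0 0 0 0 0 0))"
proof -
  define st where "st i = (regv n 0 i 0 0, MM fl fu (scv (\<Sum>t<i. xs ! t) 0 0 0 0 0 0 0))" for i
  have body: "bval (ltn 2) (st i) \<and>
      exec (Seq (RStore (sca 0) (RAdd (RLoad (sca 0)) (ldx (NReg 2)))) (inc 2)) (st i) 2 (st (Suc i))"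
    if "0 \<le> i" "i < n" for i
  proof
    show "bval (ltn 2) (st i)" unfolding st_def ltn_def using that by simp
    have "exec (Seq (RStore (sca 0) (RAdd (RLoad (sca 0)) (ldx (NReg 2)))) (inc 2)) (st i) (1 + 1) (st (Suc i))"
      unfolding st_def
      apply (rule exec_Seq[OF exec_RStore])
      using that by (simp add: add.commute)
    then show "exec (Seq (RStore (sca 0) (RAdd (RLoad (sca 0)) (ldx (NReg 2)))) (inc 2)) (st i) 2 (st (Suc i))"
      by (rule exec_mono) simp
  qed
  have loop: "exec (While (ltn 2) (Seq (RStore (sca 0) (RAdd (RLoad (sca 0)) (ldx (NReg 2)))) (inc 2)))
      (st 0) ((n - 0) * (2 + 1) + 1) (st n)"
    by (rule exec_While[where ist=0 and N=n and st=st and T=2]) (use body in \<open>auto simp: st_def ltn_def\<close>)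
  have "exec SUMP (regv n 0 0 0 0, MM fl fu (scv s0 0 0 0 0 0 0 0)) (1 + (1 + (((n - 0) * (2 + 1) + 1) + 1)))
     (regv n 0 0 0 0, MM fl fu (scv (\<Sum>t<n. xs ! t) 0 0 0 0 0 0 0))"
    unfolding SUMP_def
    apply (rule exec_Seq[OF exec_RStore])
    apply (rule exec_Seq[OF exec_NAssign])
    apply (rule exec_Seq)
    using loop apply (simp add: st_def)
    using exec_NAssign apply (simp add: st_def)
    done
  then show ?thesis by (rule exec_mono) simp
qed

end


definition cmp :: "(aexp \<Rightarrow> rexp) \<Rightarrow> bexp" where
  "cmp key = BOr (BRLess (key (NReg 2)) (key (NReg 3)))
     (BAnd (BAnd (BNot (BRLess (key (NReg 3)) (key (NReg 2)))) (BNot (BRLess (key (NReg 2)) (key (NReg 3)))))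
           (BNLess (NReg 3) (NReg 2)))"

definition RINNER :: "(aexp \<Rightarrow> rexp) \<Rightarrow> com" where
  "RINNER key = Seq (If (cmp key) (inc 4) SKIP) (inc 3)"

definition RBODY :: "(aexp \<Rightarrow> rexp) \<Rightarrow> (aexp \<Rightarrow> aexp) \<Rightarrow> com" where
  "RBODY key arr = Seq (NAssign 4 (NConst 0)) (Seq (NAssign 3 (NConst 0))
     (Seq (While (ltn 3) (RINNER key)) (Seq (RStore (arr (NReg 2)) (RofNat (NReg 4)))
     (Seq (NAssign 3 (NConst 0)) (Seq (NAssign 4 (NConst 0)) (inc 2))))))"

definition RANK :: "(aexp \<Rightarrow> rexp) \<Rightarrow> (aexp \<Rightarrow> aexp) \<Rightarrow> com" where
  "RANK key arr = Seq (NAssign 2 (NConst 0)) (Seq (While (ltn 2) (RBODY key arr)) (NAssign 2 (NConst 0)))"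

lemma card_lt_Suc: "card {l'. l' < Suc l \<and> P l'} = card {l'. l' < l \<and> P l'} + (if P l then 1 else 0)"
proof -
  have "{l'. l' < Suc l \<and> P l'} = (if P l then insert l {l'. l' < l \<and> P l'} else {l'. l' < l \<and> P l'})"
    by (auto simp: less_Suc_eq)
  then show ?thesis by simp
qed

lemma exec_RANK:
  fixes M :: "(nat \<Rightarrow> real) \<Rightarrow> nat \<Rightarrow> real" and w :: "nat \<Rightarrow> real"
  assumes keyv: "\<And>f I a. I 0 = n \<Longrightarrow> aval a I < n \<Longrightarrow> rval (key a) (I, M f) = w (aval a I)"
    and arrv: "\<And>I a. I 0 = n \<Longrightarrow> aval (arr a) I = ad (aval a I)"
    and store: "\<And>f i v. i < n \<Longrightarrow> (M f)(ad i := v) = M (f(i := v))"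
  shows "exec (RANK key arr) (regv n k 0 0 0, M finit) (n * (4 * n + 8) + 3)
           (regv n k 0 0 0, M (\<lambda>t. if t < n then real (rk n w t) else finit t))"
proof -
  define fi where "fi i = (\<lambda>t. if t < i then real (rk n w t) else finit t)" for i
  have inner: "exec (While (ltn 3) (RINNER key)) (regv n k i 0 0, M (fi i)) (n * 4 + 1)
      (regv n k i n (rk n w i), M (fi i))" if i: "i < n" for i
  proof -
    define st where "st l = (regv n k i l (card {l'. l' < l \<and> prec w l' i}), M (fi i))" for l
    have body: "bval (ltn 3) (st l) \<and> exec (RINNER key) (st l) 3 (st (Suc l))" if l: "0 \<le> l" "l < n" for l
    proof
      show "bval (ltn 3) (st l)" unfolding st_def ltn_def using l by simp
      have bv: "bval (cmp key) (st l) = prec w l i"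
        unfolding st_def cmp_def prec_def using keyv[of "regv n k i l _" "NReg 2"] keyv[of "regv n k i l _" "NReg 3"] i l
        by auto
      show "exec (RINNER key) (st l) 3 (st (Suc l))"
      proof (cases "prec w l i")
        case True
        have "exec (RINNER key) (st l) ((1 + 1) + 1) (st (Suc l))"
          unfolding RINNER_def
          apply (rule exec_Seq[OF exec_IfT[where sm="(regv n k i l (Suc (card {l'. l' < l \<and> prec w l' i})), M (fi i))"]])
          using bv True apply simp
           apply (simp add: st_def)
          using True by (simp add: st_def card_lt_Suc)
        then show ?thesis by (rule exec_mono) simp
      next
        case False
        have "exec (RINNER key) (st l) ((1 + 1) + 1) (st (Suc l))"
          unfolding RINNER_def
          apply (rule exec_Seq[OF exec_IfF[where sm="st l"]])
          using bv False apply simp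
           apply (simp add: st_def)
          using False by (simp add: st_def card_lt_Suc)
        then show ?thesis by (rule exec_mono) simp
      qed
    qed
    have "exec (While (ltn 3) (RINNER key)) (st 0) ((n - 0) * (3 + 1) + 1) (st n)"
      by (rule exec_While[where ist=0 and N=n and st=st and T=3]) (use body in \<open>auto simp: st_def ltn_def\<close>)
    then show ?thesis unfolding st_def rk_def by simp
  qed
  define st where "st i = (regv n k i 0 0, M (fi i))" for i
  have body: "bval (ltn 2) (st i) \<and> exec (RBODY key arr) (st i) (4 * n + 7) (st (Suc i))" if i: "0 \<le> i" "i < n" for i
  proof
    show "bval (ltn 2) (st i)" unfolding st_def ltn_def using i by simp
    have fs: "(fi i)(i := real (rk n w i)) = fi (Suc i)" unfolding fi_def by (auto intro!: ext)
    have "exec (RBODY key arr) (st i) (1 + (1 + ((n * 4 + 1) + (1 + (1 + (1 + 1)))))) (st (Suc i))"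
      unfolding RBODY_def st_def
      apply (rule exec_Seq[where sm="(regv n k i 0 0, M (fi i))"])
       apply simp
      apply (rule exec_Seq[where sm="(regv n k i 0 0, M (fi i))"])
       apply simp
      apply (rule exec_Seq[OF inner[OF i(2)]])
      apply (rule exec_Seq[where sm="(regv n k i n (rk n w i), M (fi (Suc i)))"])
      using arrv store i fs apply simp
      apply (rule exec_Seq[where sm="(regv n k i 0 (rk n w i), M (fi (Suc i)))"])
       apply simp
      apply (rule exec_Seq[where sm="(regv n k i 0 0, M (fi (Suc i)))"])
       apply simp
      apply simp
      done
    then show "exec (RBODY key arr) (st i) (4 * n + 7) (st (Suc i))"
      by (rule exec_mono) simp
  qed
  have loop: "exec (While (ltn 2) (RBODY key arr)) (st 0) ((n - 0) * (4 * n + 7 + 1) + 1) (st n)"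
    by (rule exec_While[where ist=0 and N=n and st=st and T="4 * n + 7"]) (use body in \<open>auto simp: st_def ltn_def\<close>)
  have finit: "fi 0 = finit" unfolding fi_def by simp
  have "exec (RANK key arr) (regv n k 0 0 0, M finit) (1 + (((n - 0) * (4 * n + 7 + 1) + 1) + 1))
           (regv n k 0 0 0, M (fi n))"
    unfolding RANK_def
    apply (rule exec_Seq[where sm="st 0"])
     apply (simp add: st_def finit)
    apply (rule exec_Seq[OF loop])
    apply (simp add: st_def)
    done
  then show ?thesis unfolding fi_def by (rule exec_mono) (simp add: algebra_simps)
qed


definition cadd :: "nat \<Rightarrow> (aexp \<Rightarrow> aexp) \<Rightarrow> aexp \<Rightarrow> (aexp \<Rightarrow> rexp) \<Rightarrow> com" where
  "cadd c arr bnd key = If (BRLess (RLoad (arr (NReg 2))) (RofNat bnd))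
      (RStore (sca c) (RAdd (RLoad (sca c)) (key (NReg 2)))) SKIP"

definition PBODY :: com where
  "PBODY = Seq (cadd 2 rla (NReg 1) keyL) (Seq (cadd 3 rla (NAdd (NReg 1) (NConst 1)) keyL)
     (Seq (cadd 4 rua (NReg 1) keyU) (Seq (cadd 5 rua (NAdd (NReg 1) (NConst 1)) keyU) (inc 2))))"

definition PSUMS :: com where
  "PSUMS = Seq (RStore (sca 2) (RConst 0)) (Seq (RStore (sca 3) (RConst 0)) (Seq (RStore (sca 4) (RConst 0))
     (Seq (RStore (sca 5) (RConst 0)) (Seq (NAssign 2 (NConst 0)) (Seq (While (ltn 2) PBODY) (NAssign 2 (NConst 0)))))))"

lemma exec_IfS:
  assumes "exec c1 s T sm" "1 \<le> T"
  shows "exec (If b c1 SKIP) s (T + 1) (if bval b s then sm else s)"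
proof -
  have "exec SKIP s T s" using exec_mono[OF exec_SKIP assms(2)] .
  then show ?thesis using exec_If[OF assms(1)] by blast
qed

lemma exec_cadd_sc:
  assumes "I 0 = n"
  shows "exec (If b (RStore (sca c) e) SKIP) (I, mem n L U \<beta> xs fl fu sc) 2
    (I, mem n L U \<beta> xs fl fu (sc(c := if bval b (I, mem n L U \<beta> xs fl fu sc)
         then rval e (I, mem n L U \<beta> xs fl fu sc) else sc c)))"
proof -
  have A: "exec (If b (RStore (sca c) e) SKIP) (I, mem n L U \<beta> xs fl fu sc) (1 + 1)
     (if bval b (I, mem n L U \<beta> xs fl fu sc) then (I, (mem n L U \<beta> xs fl fu sc)(aval (sca c) I := rval e (I, mem n L U \<beta> xs fl fu sc)))
      else (I, mem n L U \<beta> xs fl fu sc))"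
    by (rule exec_IfS[OF exec_RStore]) simp
  have B: "(if bval b (I, mem n L U \<beta> xs fl fu sc) then (I, (mem n L U \<beta> xs fl fu sc)(aval (sca c) I := rval e (I, mem n L U \<beta> xs fl fu sc)))
      else (I, mem n L U \<beta> xs fl fu sc)) = (I, mem n L U \<beta> xs fl fu (sc(c := if bval b (I, mem n L U \<beta> xs fl fu sc)
         then rval e (I, mem n L U \<beta> xs fl fu sc) else sc c)))"
    by (cases "bval b (I, mem n L U \<beta> xs fl fu sc)") (simp_all only: if_True if_False aval_adr assms mem_store fun_upd_triv)
  show ?thesis using A unfolding B by (rule exec_mono) simp
qed

context
  fixes n :: nat and L U \<beta> :: real and xs :: "real list"
begin

abbreviation "wL \<equiv> (\<lambda>i. xs ! i - L)"
abbreviation "wU \<equiv> (\<lambda>i. U - xs ! i)"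
definition "FL = (\<lambda>t. if t < n then real (rk n wL t) else zf t)"
definition "FU = (\<lambda>t. if t < n then real (rk n wU t) else zf t)"
abbreviation "Ssum \<equiv> (\<Sum>t<n. xs ! t)"
definition pp :: "(nat \<Rightarrow> real) \<Rightarrow> nat \<Rightarrow> nat \<Rightarrow> real" where
  "pp w r i = (\<Sum>t<i. if rk n w t < r then w t else 0)"

lemma FL_FU[simp]: "t < n \<Longrightarrow> FL t = real (rk n wL t)" "t < n \<Longrightarrow> FU t = real (rk n wU t)"
  unfolding FL_def FU_def by auto

lemma pp_Suc: "pp w r (Suc i) = pp w r i + (if rk n w i < r then w i else 0)"
  unfolding pp_def by simp

lemma pp_Suc': "pp w r (Suc i) = (if rk n w i < r then pp w r i + w i else pp w r i)"
  unfolding pp_def by simp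

lemma pp_PS: "pp w r n = PS n w r" unfolding pp_def PS_def ..

lemma exec_PSUMS:
  "exec PSUMS (regv n k 0 0 0, mem n L U \<beta> xs FL FU (scv Ssum A 0 0 0 0 0 0)) (10 * n + 7)
     (regv n k 0 0 0, mem n L U \<beta> xs FL FU (scv Ssum A (PS n wL k) (PS n wL (Suc k)) (PS n wU k) (PS n wU (Suc k)) 0 0))"
proof -
  define st where "st i = (regv n k i 0 0, mem n L U \<beta> xs FL FU
     (scv Ssum A (pp wL k i) (pp wL (Suc k) i) (pp wU k i) (pp wU (Suc k) i) 0 0))" for i
  have body: "bval (ltn 2) (st i) \<and> exec PBODY (st i) 9 (st (Suc i))" if i: "0 \<le> i" "i < n" for i
  proof
    show "bval (ltn 2) (st i)" unfolding st_def ltn_def using i by simp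
    let ?M = "mem n L U \<beta> xs FL FU"
    let ?I = "regv n k i 0 0"
    have "exec PBODY (st i) (2 + (2 + (2 + (2 + 1)))) (st (Suc i))"
      unfolding PBODY_def st_def cadd_def
      apply (rule exec_Seq[OF exec_cadd_sc])
       apply simp
      apply (rule exec_Seq[OF exec_cadd_sc])
       apply simp
      apply (rule exec_Seq[OF exec_cadd_sc])
       apply simp
      apply (rule exec_Seq[OF exec_cadd_sc])
       apply simp
      using i apply (simp add: pp_Suc')
      done
    then show "exec PBODY (st i) 9 (st (Suc i))" by (rule exec_mono) simp
  qed
  have loop: "exec (While (ltn 2) PBODY) (st 0) ((n - 0) * (9 + 1) + 1) (st n)"
    by (rule exec_While[where ist=0 and N=n and st=st and T=9]) (use body in \<open>auto simp: st_def ltn_def\<close>)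
  have "exec PSUMS (regv n k 0 0 0, mem n L U \<beta> xs FL FU (scv Ssum A 0 0 0 0 0 0))
     (1 + (1 + (1 + (1 + (1 + (((n - 0) * (9 + 1) + 1) + 1))))))
     (regv n k 0 0 0, mem n L U \<beta> xs FL FU
     (scv Ssum A (pp wL k n) (pp wL (Suc k) n) (pp wU k n) (pp wU (Suc k) n) 0 0))"
    unfolding PSUMS_def
    apply (rule exec_Seq[OF exec_RStore])
    apply (rule exec_Seq[OF exec_RStore])
    apply (rule exec_Seq[OF exec_RStore])
    apply (rule exec_Seq[OF exec_RStore])
    apply (rule exec_Seq[where sm="st 0"])
     apply (simp add: st_def pp_def)
    apply (rule exec_Seq[OF loop])
    apply (simp add: st_def)
    done
  then show ?thesis unfolding pp_PS by (rule exec_mono) simp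
qed

end


definition cex :: rexp where "cex = RSub (RofNat (NReg 0)) (RConst 1)"

definition SETLO :: com where
  "SETLO = If (BRLess (RLoad (rla (NReg 2))) (RofNat (NReg 1)))
     (RStore (sca 6) (RDiv (RSub (RSub (RLoad (sca 0)) (ldx (NReg 2))) (RSub (RLoad (sca 3)) (keyL (NReg 2)))) cex))
     (RStore (sca 6) (RDiv (RSub (RSub (RLoad (sca 0)) (ldx (NReg 2))) (RLoad (sca 2))) cex))"

definition SETHI :: com where
  "SETHI = If (BRLess (RLoad (rua (NReg 2))) (RofNat (NReg 1)))
     (RStore (sca 7) (RDiv (RAdd (RSub (RLoad (sca 0)) (ldx (NReg 2))) (RSub (RLoad (sca 5)) (keyU (NReg 2)))) cex))
     (RStore (sca 7) (RDiv (RAdd (RSub (RLoad (sca 0)) (ldx (NReg 2))) (RLoad (sca 4))) cex))"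

definition upd :: "rexp \<Rightarrow> com" where
  "upd e = If (BRLess (RLoad (sca 1)) e) (RStore (sca 1) e) SKIP"

fun updl :: "rexp list \<Rightarrow> com" where
  "updl [] = SKIP"
| "updl (e # es) = Seq (upd e) (updl es)"

definition Ee :: rexp where "Ee = RExp (RMul (RSub (RConst 0) (RLoad (NConst 2))) (RofNat (NReg 1)))"
definition Ee1 :: rexp where "Ee1 = RExp (RMul (RSub (RConst 0) (RLoad (NConst 2))) (RofNat (NAdd (NReg 1) (NConst 1))))"
definition sq :: "rexp \<Rightarrow> rexp" where "sq e = RMul e e"

definition tms :: "nat \<Rightarrow> rexp list" where
  "tms c = (let mm = RLoad (sca c); a = ldx (NReg 2) in
     [RMul Ee (RSub (sq (RSub (RLoad (NConst 0)) mm)) (sq (RSub a mm))),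
      RMul Ee (RSub (sq (RSub (RLoad (NConst 1)) mm)) (sq (RSub a mm))),
      RMul Ee (sq (RSub a mm)),
      RMul Ee1 (sq (RSub (RLoad (NConst 0)) mm)),
      RMul Ee1 (sq (RSub (RLoad (NConst 1)) mm))])"

definition ES :: "rexp list" where "ES = tms 6 @ tms 7"

definition JBODY :: com where
  "JBODY = Seq SETLO (Seq SETHI (Seq (updl ES) (Seq (RStore (sca 6) (RConst 0))
      (Seq (RStore (sca 7) (RConst 0)) (inc 2)))))"

definition JLOOP :: com where
  "JLOOP = Seq (NAssign 2 (NConst 0)) (Seq (While (ltn 2) JBODY) (NAssign 2 (NConst 0)))"

context
  fixes n :: nat and L U \<beta> :: real and xs :: "real list"
begin

lemma exec_SETLO:
  assumes j: "j < n"
  shows "exec SETLO (regv n k j 0 0, mem n L U \<beta> xs (FL n L xs) fu (scv (\<Sum>t<n. xs ! t) A (PS n (\<lambda>i. xs ! i - L) k) (PS n (\<lambda>i. xs ! i - L) (Suc k)) Q1 Q2 l h)) 2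
     (regv n k j 0 0, mem n L U \<beta> xs (FL n L xs) fu (scv (\<Sum>t<n. xs ! t) A (PS n (\<lambda>i. xs ! i - L) k) (PS n (\<lambda>i. xs ! i - L) (Suc k)) Q1 Q2 (lo n L xs k j) h))"
proof -
  have "exec SETLO (regv n k j 0 0, mem n L U \<beta> xs (FL n L xs) fu (scv (\<Sum>t<n. xs ! t) A (PS n (\<lambda>i. xs ! i - L) k) (PS n (\<lambda>i. xs ! i - L) (Suc k)) Q1 Q2 l h)) (1 + 1)
     (regv n k j 0 0, mem n L U \<beta> xs (FL n L xs) fu (scv (\<Sum>t<n. xs ! t) A (PS n (\<lambda>i. xs ! i - L) k) (PS n (\<lambda>i. xs ! i - L) (Suc k)) Q1 Q2 (lo n L xs k j) h))"
  proof (cases "rk n (\<lambda>i. xs ! i - L) j < k")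
    case True
    show ?thesis unfolding SETLO_def
      apply (rule exec_IfT)
      using True j apply simp
      using True j by (simp add: lo_def TS_def cex_def)
  next
    case False
    show ?thesis unfolding SETLO_def
      apply (rule exec_IfF)
      using False j apply simp
      using False j by (simp add: lo_def TS_def cex_def)
  qed
  then show ?thesis by (rule exec_mono) simp
qed

lemma exec_SETHI:
  assumes j: "j < n"
  shows "exec SETHI (regv n k j 0 0, mem n L U \<beta> xs fl (FU n U xs) (scv (\<Sum>t<n. xs ! t) A P1 P2 (PS n (\<lambda>i. U - xs ! i) k) (PS n (\<lambda>i. U - xs ! i) (Suc k)) l h)) 2
     (regv n k j 0 0, mem n L U \<beta> xs fl (FU n U xs) (scv (\<Sum>t<n. xs ! t) A P1 P2 (PS n (\<lambda>i. U - xs ! i) k) (PS n (\<lambda>i. U - xs ! i) (Suc k)) l (hi n U xs k j)))"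
proof -
  have "exec SETHI (regv n k j 0 0, mem n L U \<beta> xs fl (FU n U xs) (scv (\<Sum>t<n. xs ! t) A P1 P2 (PS n (\<lambda>i. U - xs ! i) k) (PS n (\<lambda>i. U - xs ! i) (Suc k)) l h)) (1 + 1)
     (regv n k j 0 0, mem n L U \<beta> xs fl (FU n U xs) (scv (\<Sum>t<n. xs ! t) A P1 P2 (PS n (\<lambda>i. U - xs ! i) k) (PS n (\<lambda>i. U - xs ! i) (Suc k)) l (hi n U xs k j)))"
  proof (cases "rk n (\<lambda>i. U - xs ! i) j < k")
    case True
    show ?thesis unfolding SETHI_def
      apply (rule exec_IfT)
      using True j apply simp
      using True j by (simp add: hi_def TS_def cex_def)
  next
    case False
    show ?thesis unfolding SETHI_def
      apply (rule exec_IfF)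
      using False j apply simp
      using False j by (simp add: hi_def TS_def cex_def)
  qed
  then show ?thesis by (rule exec_mono) simp
qed

lemma exec_updl:
  assumes I0: "I 0 = n"
    and vals: "list_all2 (\<lambda>e v. \<forall>A'. rval e (I, mem n L U \<beta> xs fl fu (scv S A' P1 P2 Q1 Q2 l h)) = v) es vs"
  shows "exec (updl es) (I, mem n L U \<beta> xs fl fu (scv S A P1 P2 Q1 Q2 l h)) (2 * length es + 1)
           (I, mem n L U \<beta> xs fl fu (scv S (foldl max A vs) P1 P2 Q1 Q2 l h))"
  using vals
proof (induction es arbitrary: A vs)
  case Nil
  then show ?case by (simp add: exec_SKIP)
next
  case (Cons e es)
  obtain v vs' where vs: "vs = v # vs'" and ev: "\<forall>A'. rval e (I, mem n L U \<beta> xs fl fu (scv S A' P1 P2 Q1 Q2 l h)) = v"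
    and rest: "list_all2 (\<lambda>e v. \<forall>A'. rval e (I, mem n L U \<beta> xs fl fu (scv S A' P1 P2 Q1 Q2 l h)) = v) es vs'"
    using Cons.prems by (cases vs) auto
  have step: "exec (upd e) (I, mem n L U \<beta> xs fl fu (scv S A P1 P2 Q1 Q2 l h)) 2
       (I, mem n L U \<beta> xs fl fu (scv S (max A v) P1 P2 Q1 Q2 l h))"
  proof (cases "A < v")
    case True
    have "exec (upd e) (I, mem n L U \<beta> xs fl fu (scv S A P1 P2 Q1 Q2 l h)) (1 + 1)
       (I, mem n L U \<beta> xs fl fu (scv S (max A v) P1 P2 Q1 Q2 l h))"
      unfolding upd_def
      apply (rule exec_IfT)
      using True ev I0 apply simp
      using True ev I0 by simp
    then show ?thesis by (rule exec_mono) simp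
  next
    case False
    have "exec (upd e) (I, mem n L U \<beta> xs fl fu (scv S A P1 P2 Q1 Q2 l h)) (1 + 1)
       (I, mem n L U \<beta> xs fl fu (scv S (max A v) P1 P2 Q1 Q2 l h))"
      unfolding upd_def
      apply (rule exec_IfF)
      using False ev I0 apply simp
      using False by (simp add: max_def)
    then show ?thesis by (rule exec_mono) simp
  qed
  have "exec (updl (e # es)) (I, mem n L U \<beta> xs fl fu (scv S A P1 P2 Q1 Q2 l h)) (2 + (2 * length es + 1))
           (I, mem n L U \<beta> xs fl fu (scv S (foldl max (max A v) vs') P1 P2 Q1 Q2 l h))"
    unfolding updl.simps by (rule exec_Seq[OF step Cons.IH[OF rest]])
  then show ?case unfolding vs by simp
qed

end


context
  fixes n :: nat and L U \<beta> :: real and xs :: "real list"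
begin

lemma ES_vals:
  assumes j: "j < n"
  shows "list_all2 (\<lambda>e v. \<forall>A'. rval e (regv n k j 0 0, mem n L U \<beta> xs fl fu (scv S A' P1 P2 Q1 Q2 (lo n L xs k j) (hi n U xs k j))) = v)
     ES (candl n L U \<beta> xs k j)"
  using j unfolding ES_def tms_def candl_def cterms_def Ee_def Ee1_def sq_def Let_def
  by (simp add: power2_eq_square)

end


definition KBODY :: com where
  "KBODY = Seq PSUMS (Seq JLOOP (Seq (RStore (sca 2) (RConst 0)) (Seq (RStore (sca 3) (RConst 0))
      (Seq (RStore (sca 4) (RConst 0)) (Seq (RStore (sca 5) (RConst 0)) (inc 1))))))"

definition MAIN :: com where
  "MAIN = Seq (NAssign 1 (NConst 0)) (Seq (While (ltn 1) KBODY) (NAssign 1 (NConst 0)))"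

context
  fixes n :: nat and L U \<beta> :: real and xs :: "real list"
begin

lemma len_ES: "length ES = 10" unfolding ES_def tms_def Let_def by simp

lemma exec_JLOOP:
  shows "exec JLOOP (regv n k 0 0 0, mem n L U \<beta> xs (FL n L xs) (FU n U xs) (scv (\<Sum>t<n. xs ! t) A (PS n (\<lambda>i. xs ! i - L) k) (PS n (\<lambda>i. xs ! i - L) (Suc k)) (PS n (\<lambda>i. U - xs ! i) k) (PS n (\<lambda>i. U - xs ! i) (Suc k)) 0 0))
     (n * 29 + 3)
     (regv n k 0 0 0, mem n L U \<beta> xs (FL n L xs) (FU n U xs)
        (scv (\<Sum>t<n. xs ! t) (rowacc (candl n L U \<beta> xs) k A n) (PS n (\<lambda>i. xs ! i - L) k) (PS n (\<lambda>i. xs ! i - L) (Suc k)) (PS n (\<lambda>i. U - xs ! i) k) (PS n (\<lambda>i. U - xs ! i) (Suc k)) 0 0))"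
proof -
  let ?f = "candl n L U \<beta> xs"
  let ?M = "mem n L U \<beta> xs (FL n L xs) (FU n U xs)"
  define st where "st j = (regv n k j 0 0, ?M (scv (\<Sum>t<n. xs ! t) (rowacc ?f k A j) (PS n (\<lambda>i. xs ! i - L) k) (PS n (\<lambda>i. xs ! i - L) (Suc k)) (PS n (\<lambda>i. U - xs ! i) k) (PS n (\<lambda>i. U - xs ! i) (Suc k)) 0 0))" for j
  have body: "bval (ltn 2) (st j) \<and> exec JBODY (st j) 28 (st (Suc j))" if j: "0 \<le> j" "j < n" for j
  proof
    show "bval (ltn 2) (st j)" unfolding st_def ltn_def using j by simp
    have u: "exec (updl ES) (regv n k j 0 0, ?M (scv (\<Sum>t<n. xs ! t) (rowacc ?f k A j) (PS n (\<lambda>i. xs ! i - L) k) (PS n (\<lambda>i. xs ! i - L) (Suc k)) (PS n (\<lambda>i. U - xs ! i) k) (PS n (\<lambda>i. U - xs ! i) (Suc k)) (lo n L xs k j) (hi n U xs k j)))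
        (2 * length ES + 1)
        (regv n k j 0 0, ?M (scv (\<Sum>t<n. xs ! t) (foldl max (rowacc ?f k A j) (?f k j)) (PS n (\<lambda>i. xs ! i - L) k) (PS n (\<lambda>i. xs ! i - L) (Suc k)) (PS n (\<lambda>i. U - xs ! i) k) (PS n (\<lambda>i. U - xs ! i) (Suc k)) (lo n L xs k j) (hi n U xs k j)))"
      by (rule exec_updl) (simp, rule ES_vals[OF j(2)])
    have "exec JBODY (st j) (2 + (2 + ((2 * length ES + 1) + (1 + (1 + 1))))) (st (Suc j))"
      unfolding JBODY_def st_def
      apply (rule exec_Seq[OF exec_SETLO[OF j(2)]])
      apply (rule exec_Seq[OF exec_SETHI[OF j(2)]])
      apply (rule exec_Seq[OF u])
      apply (rule exec_Seq[OF exec_RStore])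
      apply (rule exec_Seq[OF exec_RStore])
      apply simp
      done
    then show "exec JBODY (st j) 28 (st (Suc j))" unfolding len_ES by (rule exec_mono) simp
  qed
  have loop: "exec (While (ltn 2) JBODY) (st 0) ((n - 0) * (28 + 1) + 1) (st n)"
    by (rule exec_While[where ist=0 and N=n and st=st and T=28]) (use body in \<open>auto simp: st_def ltn_def\<close>)
  have "exec JLOOP (regv n k 0 0 0, ?M (scv (\<Sum>t<n. xs ! t) A (PS n (\<lambda>i. xs ! i - L) k) (PS n (\<lambda>i. xs ! i - L) (Suc k)) (PS n (\<lambda>i. U - xs ! i) k) (PS n (\<lambda>i. U - xs ! i) (Suc k)) 0 0))
     (1 + (((n - 0) * (28 + 1) + 1) + 1))
     (regv n k 0 0 0, ?M (scv (\<Sum>t<n. xs ! t) (rowacc ?f k A n) (PS n (\<lambda>i. xs ! i - L) k) (PS n (\<lambda>i. xs ! i - L) (Suc k)) (PS n (\<lambda>i. U - xs ! i) k) (PS n (\<lambda>i. U - xs ! i) (Suc k)) 0 0))"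
    unfolding JLOOP_def
    apply (rule exec_Seq[where sm="st 0"])
     apply (simp add: st_def)
    apply (rule exec_Seq[OF loop])
    apply (simp add: st_def)
    done
  then show ?thesis by (rule exec_mono) simp
qed

lemma exec_MAIN:
  "exec MAIN (regv n 0 0 0 0, mem n L U \<beta> xs (FL n L xs) (FU n U xs) (scv (\<Sum>t<n. xs ! t) 0 0 0 0 0 0 0))
     (n * (39 * n + 16) + 3)
     (regv n 0 0 0 0, mem n L U \<beta> xs (FL n L xs) (FU n U xs)
        (scv (\<Sum>t<n. xs ! t) (allacc (candl n L U \<beta> xs) n n) 0 0 0 0 0 0))"
proof -
  let ?f = "candl n L U \<beta> xs"
  let ?M = "mem n L U \<beta> xs (FL n L xs) (FU n U xs)"
  define st where "st k = (regv n k 0 0 0, ?M (scv (\<Sum>t<n. xs ! t) (allacc ?f n k) 0 0 0 0 0 0))" for k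
  have body: "bval (ltn 1) (st k) \<and> exec KBODY (st k) (39 * n + 15) (st (Suc k))" if k: "0 \<le> k" "k < n" for k
  proof
    show "bval (ltn 1) (st k)" unfolding st_def ltn_def using k by simp
    have "exec KBODY (st k) ((10 * n + 7) + ((n * 29 + 3) + (1 + (1 + (1 + (1 + 1)))))) (st (Suc k))"
      unfolding KBODY_def st_def
      apply (rule exec_Seq[OF exec_PSUMS])
      apply (rule exec_Seq[OF exec_JLOOP])
      apply (rule exec_Seq[OF exec_RStore])
      apply (rule exec_Seq[OF exec_RStore])
      apply (rule exec_Seq[OF exec_RStore])
      apply (rule exec_Seq[OF exec_RStore])
      apply simp
      done
    then show "exec KBODY (st k) (39 * n + 15) (st (Suc k))" by (rule exec_mono) simp
  qed
  have loop: "exec (While (ltn 1) KBODY) (st 0) ((n - 0) * (39 * n + 15 + 1) + 1) (st n)"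
    by (rule exec_While[where ist=0 and N=n and st=st and T="39 * n + 15"]) (use body in \<open>auto simp: st_def ltn_def\<close>)
  have "exec MAIN (regv n 0 0 0 0, ?M (scv (\<Sum>t<n. xs ! t) 0 0 0 0 0 0 0))
     (1 + (((n - 0) * (39 * n + 15 + 1) + 1) + 1))
     (regv n 0 0 0 0, ?M (scv (\<Sum>t<n. xs ! t) (allacc ?f n n) 0 0 0 0 0 0))"
    unfolding MAIN_def
    apply (rule exec_Seq[where sm="st 0"])
     apply (simp add: st_def)
    apply (rule exec_Seq[OF loop])
    apply (simp add: st_def)
    done
  then show ?thesis by (rule exec_mono) (simp add: algebra_simps)
qed

end


definition FINAL :: com where
  "FINAL = RStore (NConst 0) (RMul (RLoad (sca 1))
     (RDiv (RSub (RofNat (NReg 0)) (RConst 1)) (RMul (RofNat (NReg 0)) (RofNat (NReg 0)))))"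

definition PROG :: com where
  "PROG = Seq SUMP (Seq (RANK keyL rla) (Seq (RANK keyU rua) (Seq MAIN FINAL)))"

lemma exec_PROG:
  assumes "length xs = n"
  shows "\<exists>s'. exec PROG (init_state n L U \<beta> xs) (47 * n * n + 35 * n + 14) s' \<and>
     snd s' 0 = allacc (candl n L U \<beta> xs) n n * ((real n - 1) / (real n * real n))"
proof -
  let ?S = "\<Sum>t<n. xs ! t"
  let ?A = "allacc (candl n L U \<beta> xs) n n"
  have r1: "exec (RANK keyL rla) (regv n 0 0 0 0, mem n L U \<beta> xs zf zf (scv ?S 0 0 0 0 0 0 0)) (n * (4 * n + 8) + 3)
      (regv n 0 0 0 0, mem n L U \<beta> xs (FL n L xs) zf (scv ?S 0 0 0 0 0 0 0))"
    using exec_RANK[where M="\<lambda>f. mem n L U \<beta> xs f zf (scv ?S 0 0 0 0 0 0 0)" and key=keyL and arr=rla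
        and ad="radr n" and w="\<lambda>i. xs ! i - L" and n=n and k=0 and finit=zf]
    unfolding FL_def by simp
  have r2: "exec (RANK keyU rua) (regv n 0 0 0 0, mem n L U \<beta> xs (FL n L xs) zf (scv ?S 0 0 0 0 0 0 0)) (n * (4 * n + 8) + 3)
      (regv n 0 0 0 0, mem n L U \<beta> xs (FL n L xs) (FU n U xs) (scv ?S 0 0 0 0 0 0 0))"
    using exec_RANK[where M="\<lambda>f. mem n L U \<beta> xs (FL n L xs) f (scv ?S 0 0 0 0 0 0 0)" and key=keyU and arr=rua
        and ad="uadr n" and w="\<lambda>i. U - xs ! i" and n=n and k=0 and finit=zf]
    unfolding FU_def by simp
  have "exec PROG (regv n 0 0 0 0, mem n L U \<beta> xs zf zf (scv 0 0 0 0 0 0 0 0))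
     ((3 * n + 4) + ((n * (4 * n + 8) + 3) + ((n * (4 * n + 8) + 3) + ((n * (39 * n + 16) + 3) + 1))))
     (regv n 0 0 0 0, (mem n L U \<beta> xs (FL n L xs) (FU n U xs) (scv ?S ?A 0 0 0 0 0 0))
        (0 := ?A * ((real n - 1) / (real n * real n))))"
    unfolding PROG_def
    apply (rule exec_Seq[OF exec_SUMP])
    apply (rule exec_Seq[OF r1])
    apply (rule exec_Seq[OF r2])
    apply (rule exec_Seq[OF exec_MAIN])
    unfolding FINAL_def
    apply simp
    done
  then have "exec PROG (init_state n L U \<beta> xs) (47 * n * n + 35 * n + 14)
     (regv n 0 0 0 0, (mem n L U \<beta> xs (FL n L xs) (FU n U xs) (scv ?S ?A 0 0 0 0 0 0))
        (0 := ?A * ((real n - 1) / (real n * real n))))"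
    unfolding init_eq[OF assms] by (rule exec_mono) (simp add: algebra_simps)
  then show ?thesis by fastforce
qed

theorem mainTheorem5:
  shows "\<exists>(P :: com) (C :: nat). \<forall>(n :: nat) (L :: real) (U :: real) (\<beta> :: real) (V :: real list).
           L < U \<longrightarrow> 1 \<le> n \<longrightarrow> 0 < \<beta> \<longrightarrow> V \<in> datasets n L U \<longrightarrow>
           (\<exists>t s'. big P (init_state n L U \<beta> V) t s' \<and> t \<le> C * n\<^sup>2 \<and>
                   snd s' 0 = smooth_sens variance \<beta> n L U V)"
proof -
  have main: "\<exists>t s'. big PROG (init_state n L U \<beta> V) t s' \<and> t \<le> 96 * n\<^sup>2 \<and>
                   snd s' 0 = smooth_sens variance \<beta> n L U V"
    if LU: "L < U" and n: "1 \<le> n" and \<beta>: "0 < \<beta>" and V: "V \<in> datasets n L U"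
    for n :: nat and L U \<beta> :: real and V :: "real list"
  proof -
  have lV: "length V = n" using V datasetsD by auto
  obtain s' where s': "exec PROG (init_state n L U \<beta> V) (47 * n * n + 35 * n + 14) s'"
    "snd s' 0 = allacc (candl n L U \<beta> V) n n * ((real n - 1) / (real n * real n))"
    using exec_PROG[OF lV] by blast
  obtain t where t: "big PROG (init_state n L U \<beta> V) t s'" "t \<le> 47 * n * n + 35 * n + 14"
    using s'(1) unfolding exec_def by blast
  have "47 * n * n + 35 * n + 14 \<le> 96 * n\<^sup>2"
  proof -
    have "n \<le> n * n" "1 \<le> n * n" using n by (simp_all add: mult_le_mono)
    then show ?thesis unfolding power2_eq_square by linarith
  qed
  then have tb: "t \<le> 96 * n\<^sup>2" using t(2) by linarith
  have "snd s' 0 = smooth_sens variance \<beta> n L U V"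
    unfolding s'(2) SS_formula[OF V n LU less_imp_le[OF \<beta>]] Kf_def by (simp add: power2_eq_square mult.commute)
  then show "\<exists>t s'. big PROG (init_state n L U \<beta> V) t s' \<and> t \<le> 96 * n\<^sup>2 \<and>
                   snd s' 0 = smooth_sens variance \<beta> n L U V"
    using t(1) tb by blast
  qed
  show ?thesis
    apply (rule exI[of _ PROG])
    apply (rule exI[of _ 96])
    using main by blast
qed

end
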